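(* Let $n\ge1$ and $\gamma\in PSL(n+1,\mathbb{C})$. Then $\gamma$ is loxodromic if and only if there is a nonempty open set $W\subsetneq\mathbb{P}^n_{\mathbb{C}}$ such that $\gamma(\overline W)\subset W$.
   Context: $\gamma\in PSL(n+1,\mathbb{C})=GL(n+1,\mathbb{C})/\mathbb{C}^*$, acting on $\mathbb{P}^n_{\mathbb{C}}$, is called loxodromic if every lift $\widetilde\gamma\in SL(n+1,\mathbb{C})$ of $\gamma$ has an eigenvalue of modulus different from $1$. *)

theory Defs
  imports "HOL-Analysis.Analysis"
begin

text \<open>Complex projective space P(V) for V = complex^'n (so CARD('n) = n+1):
  points are complex lines through the origin, represented as the set of nonzero
  vectors on the line.\<close>

definition pline :: "complex^'n \<Rightarrow> (complex^'n) set" where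
  "pline v = {c *s v | c. c \<noteq> 0}"

definition proj_space :: "(complex^'n) set set" where
  "proj_space = {pline v | v. v \<noteq> 0}"

definition proj_top :: "(complex^'n) set topology" where
  "proj_top = topology (\<lambda>U. U \<subseteq> proj_space \<and>
       open {v. v \<noteq> 0 \<and> pline v \<in> U})"

lemma istopology_proj:
  "istopology (\<lambda>U::(complex^'n) set set. U \<subseteq> proj_space \<and>
       open {v. v \<noteq> 0 \<and> pline v \<in> U})"
proof -
  have 1: "{v. v \<noteq> 0 \<and> pline v \<in> S \<inter> T} =
      {v. v \<noteq> 0 \<and> pline v \<in> S} \<inter> {v. v \<noteq> 0 \<and> pline v \<in> T}"
    for S T :: "(complex^'n) set set" by auto
  have 2: "{v. v \<noteq> 0 \<and> pline v \<in> \<Union>K} =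
      \<Union>((\<lambda>U. {v. v \<noteq> 0 \<and> pline v \<in> U}) ` K)"
    for K :: "(complex^'n) set set set" by auto
  show ?thesis
  proof (simp only: istopology_def, rule conjI; intro allI impI)
    fix S T :: "(complex^'n) set set"
    assume a: "S \<subseteq> proj_space \<and> open {v. v \<noteq> 0 \<and> pline v \<in> S}"
       "T \<subseteq> proj_space \<and> open {v. v \<noteq> 0 \<and> pline v \<in> T}"
    then show "S \<inter> T \<subseteq> proj_space \<and> open {v. v \<noteq> 0 \<and> pline v \<in> S \<inter> T}"
      unfolding 1 using open_Int[of "{v. v \<noteq> 0 \<and> pline v \<in> S}" "{v. v \<noteq> 0 \<and> pline v \<in> T}"] by blast
  next
    fix K :: "(complex^'n) set set set"
    assume a: "\<forall>U\<in>K. U \<subseteq> proj_space \<and> open {v. v \<noteq> 0 \<and> pline v \<in> U}"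
    then show "\<Union>K \<subseteq> proj_space \<and> open {v. v \<noteq> 0 \<and> pline v \<in> \<Union>K}"
      unfolding 2 by (intro conjI open_UN ballI) auto
  qed
qed

definition proj_map :: "complex^'n^'n \<Rightarrow> (complex^'n) set \<Rightarrow> (complex^'n) set" where
  "proj_map A p = pline (A *v (SOME v. v \<in> p))"

text \<open>Loxodromic: every lift to SL (i.e. every scalar multiple of A with determinant 1)
  has an eigenvalue of modulus different from 1.\<close>

definition loxodromic :: "complex^'n^'n \<Rightarrow> bool" where
  "loxodromic A \<longleftrightarrow> (\<forall>c. det (mat c ** A) = 1 \<longrightarrow>
      (\<exists>lam v. v \<noteq> 0 \<and> (mat c ** A) *v v = lam *s v \<and> norm lam \<noteq> 1))"

end

theory Submission
  imports Defs "Jordan_Normal_Form.Schur_Decomposition" "Jordan_Normal_Form.Char_Poly"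
begin

abbreviation (input) hmat :: "'a::zero \<Rightarrow> 'a^'n^'n" where "hmat \<equiv> Finite_Cartesian_Product.mat"
abbreviation (input) hdet :: "'a::comm_ring_1^'n^'n \<Rightarrow> 'a" where "hdet \<equiv> Determinants.det"

lemma schur_sorted:
  fixes M :: "complex mat"
  assumes M: "M \<in> carrier_mat n n"
  shows "\<exists>B P Q. similar_mat_wit M B P Q \<and> upper_triangular B \<and>
     (\<forall>i j. i \<le> j \<longrightarrow> j < n \<longrightarrow> cmod (B$$(j,j)) \<le> cmod (B$$(i,i)))"
proof -
  obtain as where as: "char_poly M = (\<Prod>a\<leftarrow>as. [:- a, 1:])" "length as = n"
    using char_poly_factorized[OF M] by blast
  define es where "es = sort_key (\<lambda>x. - cmod x) as"
  have ms: "mset es = mset as" unfolding es_def by simp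
  have "(\<Prod>a\<leftarrow>es. [:- a, 1:]) = (\<Prod>a\<leftarrow>as. [:- a, 1:])"
    by (metis mset_map ms prod_mset_prod_list)
  with as have cp: "char_poly M = (\<Prod>a\<leftarrow>es. [:- a, 1:])" by simp
  obtain B P Q where sd: "schur_decomposition M es = (B,P,Q)" by (cases "schur_decomposition M es") auto
  from schur_decomposition[OF M cp sd] have
    sw: "similar_mat_wit M B P Q" and ut: "upper_triangular B" and dg: "diag_mat B = es" by auto
  from similar_mat_witD2[OF M sw] have Bc: "B \<in> carrier_mat n n" by auto
  have len: "length es = n" using ms as(2) by (metis size_mset)
  have srt: "sorted (map (\<lambda>x. - cmod x) es)" unfolding es_def by simp
  have "cmod (B$$(j,j)) \<le> cmod (B$$(i,i))" if "i \<le> j" "j < n" for i j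
  proof -
    have "B$$(i,i) = es!i" "B$$(j,j) = es!j" using dg Bc that unfolding diag_mat_def
      by (auto dest!: arg_cong[where f="\<lambda>l. l!i"] arg_cong[where f="\<lambda>l. l!j"])
    moreover have "- cmod (es!i) \<le> - cmod (es!j)"
      using sorted_nth_mono[OF srt that(1)] that len by simp
    ultimately show ?thesis by simp
  qed
  then show ?thesis using sw ut by blast
qed

no_notation Matrix.vec_index (infixl "$" 100)
no_notation Matrix.scalar_prod (infix "\<bullet>" 70)
hide_const (open) Matrix.mat Determinant.det Matrix.vec

definition fromM :: "('n \<Rightarrow> nat) \<Rightarrow> complex mat \<Rightarrow> complex^'n^'n" where
  "fromM idx M = (\<chi> i j. M $$ (idx i, idx j))"

definition toM :: "('n::finite \<Rightarrow> nat) \<Rightarrow> complex^'n^'n \<Rightarrow> complex mat" where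
  "toM idx A = Matrix.mat CARD('n) CARD('n) (\<lambda>(i,j). A $ inv_into UNIV idx i $ inv_into UNIV idx j)"

lemma fromM_toM:
  assumes b: "bij_betw idx (UNIV::'n::finite set) {0..<CARD('n)}"
  shows "fromM idx (toM idx A) = A"
proof -
  have "inv_into UNIV idx (idx i) = i" for i using b by (simp add: bij_betw_def)
  moreover have "idx i < CARD('n)" for i using b by (auto simp: bij_betw_def)
  ultimately show ?thesis unfolding fromM_def toM_def by (simp add: vec_eq_iff)
qed

lemma toM_carrier: "toM idx (A::complex^'n::finite^'n) \<in> carrier_mat CARD('n::finite) CARD('n)"
  unfolding toM_def by simp

lemma fromM_mult:
  assumes b: "bij_betw idx (UNIV::'n::finite set) {0..<CARD('n)}"
    and X: "X \<in> carrier_mat CARD('n) CARD('n)" and Y: "Y \<in> carrier_mat CARD('n) CARD('n)"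
  shows "fromM idx (X * Y) = (fromM idx X :: complex^'n^'n) ** fromM idx Y"
proof -
  have lt: "idx i < CARD('n)" for i using b by (auto simp: bij_betw_def)
  have "(X * Y) $$ (idx i, idx j) = (\<Sum>k\<in>UNIV. X $$ (idx i, idx k) * Y $$ (idx k, idx j))" for i j
  proof -
    have "(X * Y) $$ (idx i, idx j) = (\<Sum>k\<in>{0..<CARD('n)}. X $$ (idx i, k) * Y $$ (k, idx j))"
      using X Y lt by (simp add: scalar_prod_def)
    also have "\<dots> = (\<Sum>k\<in>UNIV. X $$ (idx i, idx k) * Y $$ (idx k, idx j))"
      using sum.reindex_bij_betw[OF b, of "\<lambda>k. X $$ (idx i, k) * Y $$ (k, idx j)"] by simp
    finally show ?thesis .
  qed
  then show ?thesis unfolding fromM_def by (simp add: vec_eq_iff matrix_matrix_mult_def)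
qed

lemma fromM_one:
  assumes b: "bij_betw idx (UNIV::'n::finite set) {0..<CARD('n)}"
  shows "fromM idx (1\<^sub>m CARD('n)) = (hmat 1 :: complex^'n^'n)"
proof -
  have lt: "idx i < CARD('n)" for i using b by (auto simp: bij_betw_def)
  have "idx i = idx j \<longleftrightarrow> i = j" for i j using b by (auto simp: bij_betw_def inj_on_def)
  then show ?thesis unfolding fromM_def using lt by (simp add: vec_eq_iff Finite_Cartesian_Product.mat_def)
qed

lemma schur_hol:
  fixes A :: "complex^'n::finite^'n"
  obtains idx Q Qi T where "bij_betw idx (UNIV::'n set) {0..<CARD('n)}"
    "Q ** Qi = hmat 1" "Qi ** Q = hmat 1" "A = Qi ** T ** Q"
    "\<forall>i j. idx j < idx i \<longrightarrow> T$i$j = 0"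
    "\<forall>i j. idx i \<le> idx j \<longrightarrow> cmod (T$j$j) \<le> cmod (T$i$i)"
proof -
  obtain idx where b: "bij_betw idx (UNIV::'n set) {0..<CARD('n)}"
    using ex_bij_betw_finite_nat[of "UNIV::'n set"] by (auto simp del: atLeast0LessThan)
  have lt: "idx i < CARD('n)" for i using b by (auto simp: bij_betw_def)
  have ex: "\<exists>B P Q. similar_mat_wit (toM idx A) B P Q \<and> upper_triangular B \<and>
     (\<forall>i j. i \<le> j \<longrightarrow> j < CARD('n) \<longrightarrow> cmod (B$$(j,j)) \<le> cmod (B$$(i,i)))"
    by (rule schur_sorted[OF toM_carrier])
  then obtain B P Q where sw: "similar_mat_wit (toM idx A) B P Q" and ut: "upper_triangular B"
    and so: "\<forall>i j. i \<le> j \<longrightarrow> j < CARD('n) \<longrightarrow> cmod (B$$(j,j)) \<le> cmod (B$$(i,i))"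
    by (elim exE conjE)
  note D = similar_mat_witD2[OF toM_carrier sw]
  have c: "B \<in> carrier_mat CARD('n) CARD('n)" "P \<in> carrier_mat CARD('n) CARD('n)"
     "Q \<in> carrier_mat CARD('n) CARD('n)" and pq: "P * Q = 1\<^sub>m CARD('n)" "Q * P = 1\<^sub>m CARD('n)"
    and eq: "toM idx A = P * B * Q"
    using D by blast+
  show ?thesis
  proof
    show "fromM idx Q ** fromM idx P = hmat 1"
      using fromM_mult[OF b c(3) c(2)] pq fromM_one[OF b] by simp
    show "fromM idx P ** fromM idx Q = hmat 1"
      using fromM_mult[OF b c(2) c(3)] pq fromM_one[OF b] by simp
    have "A = fromM idx (P * B * Q)" using eq fromM_toM[OF b] by metis
    also have "\<dots> = fromM idx P ** fromM idx B ** fromM idx Q"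
      using fromM_mult[OF b _ c(3), of "P*B"] fromM_mult[OF b c(2) c(1)] c by simp
    finally show "A = fromM idx P ** fromM idx B ** fromM idx Q" .
    show "\<forall>i j. idx j < idx i \<longrightarrow> fromM idx B $ i $ j = 0"
      using ut c lt unfolding upper_triangular_def fromM_def by auto
    show "\<forall>i j. idx i \<le> idx j \<longrightarrow> cmod (fromM idx B $ j $ j) \<le> cmod (fromM idx B $ i $ i)"
      using so lt unfolding fromM_def by auto
  qed (fact b)
qed

lemma perm_idx_decr:
  fixes p :: "'n::finite \<Rightarrow> 'n"
  assumes p: "p permutes UNIV" and ne: "p \<noteq> id" and inj: "inj idx"
  shows "\<exists>i. (idx (p i) :: nat) < idx i"
proof (rule ccontr)
  assume "\<not> ?thesis"
  then have le: "\<forall>i. idx i \<le> idx (p i)" by (simp add: not_less)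
  have eqs: "sum idx UNIV = sum (idx \<circ> p) UNIV" using sum.permute[OF p] by simp
  have "\<forall>i. idx (p i) = idx i"
  proof (rule ccontr)
    assume "\<not> (\<forall>i. idx (p i) = idx i)"
    then obtain i where "idx i < idx (p i)" using le le_neq_implies_less by metis
    then have "sum idx UNIV < sum (idx \<circ> p) UNIV"
      using sum_strict_mono_ex1[of UNIV idx "idx \<circ> p"] le by auto
    then show False using eqs by simp
  qed
  then have "p = id" using inj by (auto simp: inj_def)
  then show False using ne by simp
qed

lemma det_tri:
  fixes M :: "'a::comm_ring_1^'n::finite^'n"
  assumes inj: "inj (idx :: 'n \<Rightarrow> nat)" and up: "\<And>i j. idx j < idx i \<Longrightarrow> M$i$j = 0"
  shows "hdet M = (\<Prod>i\<in>UNIV. M$i$i)"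
proof -
  let ?U = "UNIV:: 'n set"
  let ?PU = "{p. p permutes ?U}"
  let ?pp = "(\<lambda>p. of_int (sign p) * prod (\<lambda>i. M$i$p i) (UNIV :: 'n set))"
  have fU: "finite ?U" by simp
  have id0: "{id} \<subseteq> ?PU" by (auto simp: permutes_id)
  have p0: "\<forall>p \<in> ?PU -{id}. ?pp p = 0"
  proof
    fix p
    assume p: "p \<in> ?PU - {id}"
    then obtain i where i: "idx (p i) < idx i" using perm_idx_decr[OF _ _ inj] by blast
    from up[OF i] have "\<exists>i \<in> ?U. M$i$p i = 0" by blast
    with prod_zero[OF fU] show "?pp p = 0" by force
  qed
  from sum.mono_neutral_cong_left[OF finite_permutations[OF fU] id0 p0] show ?thesis
    unfolding Determinants.det_def by (simp add: sign_id)
qed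

lemma tri_eigen_diag:
  fixes M :: "complex^'n::finite^'n"
  assumes up: "\<And>i j. idx j < idx i \<Longrightarrow> M$i$j = 0" and inj: "inj (idx :: 'n \<Rightarrow> nat)"
    and ev: "M *v y = \<mu> *s y" and y: "y \<noteq> 0"
  shows "\<exists>i. \<mu> = M$i$i"
proof -
  let ?S = "{i. y$i \<noteq> 0}"
  have ne: "?S \<noteq> {}"
  proof
    assume "?S = {}"
    then have "\<forall>i. y$i = 0" by blast
    then have "y = 0" by (simp add: Finite_Cartesian_Product.vec_eq_iff)
    then show False using y by simp
  qed
  have fS: "finite ?S" by (rule finite)
  have "Max (idx ` ?S) \<in> idx ` ?S" using ne by (intro Max_in finite_imageI fS) simp
  then obtain i where im': "Max (idx ` ?S) = idx i" and i: "i \<in> ?S" by (rule imageE)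
  note im = im'[symmetric]
  have mx: "idx j \<le> idx i" if "j \<in> ?S" for j
    unfolding im using fS that by simp
  have z: "M$i$j * y$j = 0" if "j \<noteq> i" for j
  proof (cases "idx j < idx i")
    case True then show ?thesis using up by simp
  next
    case False
    have "idx j \<noteq> idx i" using that inj by (auto simp: inj_def)
    then have "idx i < idx j" using False by simp
    then have "y$j = 0" using mx by force
    then show ?thesis by simp
  qed
  have "(M *v y)$i = (\<Sum>j\<in>UNIV. M$i$j * y$j)" by (simp add: matrix_vector_mult_def)
  also have "\<dots> = M$i$i * y$i + (\<Sum>j\<in>UNIV-{i}. M$i$j * y$j)"
    by (simp add: sum.remove)
  also have "(\<Sum>j\<in>UNIV-{i}. M$i$j * y$j) = 0" using z by (intro sum.neutral) auto
  finally have "\<mu> * y$i = M$i$i * y$i" using ev by simp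
  then show ?thesis using i by auto
qed

definition Vk :: "('n::finite \<Rightarrow> nat) \<Rightarrow> nat \<Rightarrow> (complex^'n) set" where
  "Vk idx k = {y. \<forall>i. k \<le> idx i \<longrightarrow> y$i = 0}"

lemma mat_cmult_vec: "(hmat c :: complex^'n::finite^'n) *v x = c *s x"
proof -
  have "(hmat c *v x) $ j = c * x $ j" for j
  proof -
    have "(hmat c *v x) $ j = (\<Sum>k\<in>UNIV. (if j = k then c else 0) * x$k)"
      by (simp add: matrix_vector_mult_def Finite_Cartesian_Product.mat_def)
    also have "\<dots> = (\<Sum>k\<in>UNIV. (if j = k then c * x$k else 0))"
      by (rule sum.cong) auto
    also have "\<dots> = c * x$j" by simp
    finally show ?thesis .
  qed
  then show ?thesis by (simp add: Finite_Cartesian_Product.vec_eq_iff)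
qed

lemma sum_supp:
  fixes f :: "'n::finite \<Rightarrow> 'a::comm_monoid_add"
  assumes "\<And>l. l \<notin> S \<Longrightarrow> f l = 0"
  shows "(\<Sum>l\<in>UNIV. f l) = (\<Sum>l\<in>S. f l)"
  using assms by (intro sum.mono_neutral_right) auto

lemma tri_diag_eigen:
  fixes M :: "complex^'n::finite^'n"
  assumes up: "\<And>i j. idx j < idx i \<Longrightarrow> M$i$j = 0" and inj: "inj (idx :: 'n \<Rightarrow> nat)"
  shows "\<exists>y. y \<noteq> 0 \<and> M *v y = M$i$i *s y"
proof -
  define B where "B = M - hmat (M$i$i)"
  have upB: "B$a$b = 0" if "idx b < idx a" for a b
  proof -
    have "a \<noteq> b" using that by auto
    then show ?thesis using up[OF that] unfolding B_def by (simp add: Finite_Cartesian_Product.mat_def)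
  qed
  have "hdet B = (\<Prod>j\<in>UNIV. B$j$j)" by (rule det_tri[OF inj upB])
  also have "\<dots> = 0" 
  proof (rule prod_zero)
    show "\<exists>a\<in>UNIV. B $ a $ a = 0" by (rule bexI[of _ i]) (simp_all add: B_def Finite_Cartesian_Product.mat_def)
  qed simp
  finally have "\<not> invertible B" using invertible_det_nz by blast
  then have "\<not> (\<forall>x. B *v x = 0 \<longrightarrow> x = 0)"
    using invertible_left_inverse matrix_left_invertible_ker by metis
  then obtain x where x: "B *v x = 0" "x \<noteq> 0" by blast
  have "M *v x - M$i$i *s x = 0" using x(1) unfolding B_def
    by (simp add: matrix_vector_mult_diff_rdistrib mat_cmult_vec)
  then show ?thesis using x(2) by (intro exI[of _ x]) simp
qed

lemma tri_Vk_inv: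
  fixes M :: "complex^'n::finite^'n"
  assumes up: "\<And>i j. idx j < idx i \<Longrightarrow> M$i$j = 0" and y: "y \<in> Vk idx k"
  shows "M *v y \<in> Vk idx k"
  unfolding Vk_def
proof (intro CollectI allI impI)
  fix i assume ki: "k \<le> idx i"
  have "M$i$j * y$j = 0" for j
  proof (cases "idx j < idx i")
    case True then show ?thesis using up by simp
  next
    case False then have "y$j = 0" using y ki unfolding Vk_def by simp
    then show ?thesis by simp
  qed
  then show "(M *v y)$i = 0" by (simp add: matrix_vector_mult_def)
qed

lemma mult_single:
  fixes M :: "complex^'n::finite^'n"
  shows "(M *v (\<chi> j. if j = p then c else 0))$i = M$i$p * c"
proof -
  have "(M *v (\<chi> j. if j = p then c else 0))$i = (\<Sum>j\<in>UNIV. M$i$j * (if j = p then c else 0))"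
    by (simp add: matrix_vector_mult_def)
  also have "\<dots> = (\<Sum>j\<in>UNIV. (if j = p then M$i$j * c else 0))" by (rule sum.cong) auto
  also have "\<dots> = M$i$p * c" by (subst sum.delta) auto
  finally show ?thesis .
qed

lemma bij_idx_facts:
  assumes b: "bij_betw idx (UNIV::'n::finite set) {0..<CARD('n)}"
  shows "inj idx" "\<And>i. idx i < CARD('n)" "\<And>k. k < CARD('n) \<Longrightarrow> \<exists>p. idx p = k"
proof -
  show "inj idx" using b by (simp add: bij_betw_def)
  show "\<And>i. idx i < CARD('n)"
  proof -
    fix i
    have r: "range idx = {0..<CARD('n)}" using b by (simp add: bij_betw_def)
    have "idx i \<in> range idx" by (rule rangeI)
    then have "idx i \<in> {0..<CARD('n)}" by (simp only: r)
    then show "idx i < CARD('n)" by simp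
  qed
  show "\<And>k. k < CARD('n) \<Longrightarrow> \<exists>p. idx p = k"
  proof -
    fix k assume "k < CARD('n)"
    then have "k \<in> idx ` UNIV" using b by (simp add: bij_betw_def)
    then show "\<exists>p. idx p = k" by (rule imageE) (rule exI, rule sym)
  qed
qed

lemma tri_Vk_surj:
  fixes M :: "complex^'n::finite^'n"
  assumes up: "\<And>i j. idx j < idx i \<Longrightarrow> M$i$j = 0" and b: "bij_betw idx (UNIV::'n set) {0..<CARD('n)}"
    and nz: "\<And>i. M$i$i \<noteq> 0"
  shows "y \<in> Vk idx k \<Longrightarrow> \<exists>x\<in>Vk idx k. M *v x = y"
proof (induction k arbitrary: y)
  case 0
  then have "y = 0" unfolding Vk_def by (simp add: Finite_Cartesian_Product.vec_eq_iff)
  moreover have "(0::complex^'n) \<in> Vk idx 0" unfolding Vk_def by simp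
  ultimately show ?case by (intro bexI[of _ 0]) simp_all
next
  case (Suc k)
  note bf = bij_idx_facts[OF b]
  show ?case
  proof (cases "k < CARD('n)")
    case False
    have "y \<in> Vk idx k" unfolding Vk_def
    proof (intro CollectI allI impI)
      fix i assume "k \<le> idx i"
      then show "y$i = 0" using bf(2)[of i] False by simp
    qed
    then obtain x where x: "x \<in> Vk idx k" "M *v x = y" using Suc.IH by blast
    have "x \<in> Vk idx (Suc k)" using x(1) unfolding Vk_def by simp
    then show ?thesis using x(2) by (rule bexI[rotated])
  next
    case True
    then obtain p where p: "idx p = k" using bf(3) by blast
    define c where "c = y$p / M$p$p"
    define x1 :: "complex^'n" where "x1 = (\<chi> j. if j = p then c else 0)"
    define y' where "y' = y - M *v x1"
    have "y' \<in> Vk idx k" unfolding Vk_def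
    proof (intro CollectI allI impI)
      fix i assume ki: "k \<le> idx i"
      show "y'$i = 0"
      proof (cases "i = p")
        case True
        have "y'$i = y$p - M$p$p * c" unfolding y'_def x1_def True using mult_single[of M p c p] by simp
        also have "\<dots> = 0" using nz[of p] by (simp add: c_def)
        finally show ?thesis .
      next
        case False
        then have "idx i \<noteq> idx p" using bf(1) by (simp add: inj_eq)
        then have lt: "Suc k \<le> idx i" using ki p by simp
        have "y$i = 0" using Suc.prems lt unfolding Vk_def by simp
        moreover have "M$i$p = 0" using up[of p i] p lt by simp
        ultimately show ?thesis unfolding y'_def x1_def using mult_single[of M p c i] by simp
      qed
    qed
    then obtain x2 where x2: "x2 \<in> Vk idx k" "M *v x2 = y'" using Suc.IH by blast
    have "x1 + x2 \<in> Vk idx (Suc k)" unfolding Vk_def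
    proof (intro CollectI allI impI)
      fix i assume "Suc k \<le> idx i"
      then have "i \<noteq> p" "k \<le> idx i" using p by auto
      then show "(x1 + x2)$i = 0" using x2(1) unfolding Vk_def x1_def by simp
    qed
    moreover have "M *v (x1 + x2) = y"
      using x2(2) unfolding y'_def by (simp add: matrix_vector_right_distrib)
    ultimately show ?thesis by (rule bexI[rotated])
  qed
qed

lemma tri_coord_top:
  fixes M :: "complex^'n::finite^'n"
  assumes up: "\<And>i j. idx j < idx i \<Longrightarrow> M$i$j = 0" and inj: "inj idx"
    and y: "y \<in> Vk idx (Suc (idx p))"
  shows "(M *v y)$p = M$p$p * y$p"
proof -
  have "(M *v y)$p = (\<Sum>l\<in>UNIV. M$p$l * y$l)" by (simp add: matrix_vector_mult_def)
  also have "\<dots> = (\<Sum>l\<in>{p}. M$p$l * y$l)"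
  proof (rule sum_supp)
    fix l assume "l \<notin> {p}"
    then have "idx l \<noteq> idx p" using inj by (auto simp: inj_def)
    then consider "idx l < idx p" | "Suc (idx p) \<le> idx l" by linarith
    then show "M$p$l * y$l = 0"
    proof cases
      case 1 then show ?thesis using up by simp
    next
      case 2 then show ?thesis using y unfolding Vk_def by simp
    qed
  qed
  finally show ?thesis by simp
qed

lemma tri_coord_next:
  fixes M :: "complex^'n::finite^'n"
  assumes up: "\<And>i j. idx j < idx i \<Longrightarrow> M$i$j = 0" and inj: "inj idx"
    and pq: "idx p = Suc (idx q)"
    and y: "y \<in> Vk idx (Suc (idx p))"
  shows "(M *v y)$q = M$q$q * y$q + M$q$p * y$p"
proof -
  have ne: "p \<noteq> q" using pq by auto
  have "(M *v y)$q = (\<Sum>l\<in>UNIV. M$q$l * y$l)" by (simp add: matrix_vector_mult_def)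
  also have "\<dots> = (\<Sum>l\<in>{q,p}. M$q$l * y$l)"
  proof (rule sum_supp)
    fix l assume "l \<notin> {q,p}"
    then have "idx l \<noteq> idx p" "idx l \<noteq> idx q" using inj by (auto simp: inj_def)
    then consider "idx l < idx q" | "Suc (idx p) \<le> idx l" using pq by linarith
    then show "M$q$l * y$l = 0"
    proof cases
      case 1 then show ?thesis using up by simp
    next
      case 2 then show ?thesis using y unfolding Vk_def by simp
    qed
  qed
  finally show ?thesis using ne by simp
qed

lemma re_cnj_self: "Re (cnj z * z) = (cmod z)^2"
  using cmod_power2[of z] by (simp add: power2_eq_square)

lemma phi_exists:
  fixes \<alpha> \<beta> :: complex
  assumes a: "cmod \<alpha> = 1"
  shows "\<exists>(\<phi>::complex \<Rightarrow> real) c \<omega> Kb. continuous_on UNIV \<phi> \<and> c \<ge> 0 \<and>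
     (\<forall>z. \<phi> (\<alpha> * z + \<beta>) = \<phi> z + c) \<and> (\<forall>z \<delta>. \<delta> > 0 \<longrightarrow> \<phi> z < \<phi> (z + of_real \<delta> * \<omega> z)) \<and>
     (\<forall>z. cmod (\<omega> z) \<le> Kb)"
proof (cases "\<alpha> = 1")
  case False
  define c0 where "c0 = \<beta> / (1 - \<alpha>)"
  have c0: "\<alpha> * c0 + \<beta> = c0" using False unfolding c0_def by (simp add: field_simps)
  define \<omega> where "\<omega> z = (if z = c0 then 1 else (z - c0) / of_real (cmod (z - c0)))" for z
  have inv: "cmod (\<alpha> * z + \<beta> - c0) = cmod (z - c0)" for z
  proof -
    have "\<alpha> * z + \<beta> - c0 = \<alpha> * (z - c0)" using c0 by (simp add: algebra_simps)
    then show ?thesis using a by (simp add: norm_mult)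
  qed
  have incr: "cmod (z - c0) < cmod (z + of_real \<delta> * \<omega> z - c0)" if "\<delta> > 0" for z \<delta>
  proof (cases "z = c0")
    case True then show ?thesis using that by (simp add: \<omega>_def)
  next
    case False
    let ?n = "cmod (z - c0)"
    have n: "?n > 0" using False by simp
    have "z + of_real \<delta> * \<omega> z - c0 = (z - c0) * of_real (1 + \<delta> / ?n)"
      using n False by (simp add: \<omega>_def field_simps)
    then have "cmod (z + of_real \<delta> * \<omega> z - c0) = ?n * cmod (of_real (1 + \<delta> / ?n) :: complex)"
      by (simp only: norm_mult)
    also have "cmod (of_real (1 + \<delta> / ?n) :: complex) = 1 + \<delta> / ?n"
      using that n by (simp only: norm_of_real) simp
    finally have "cmod (z + of_real \<delta> * \<omega> z - c0) = ?n * (1 + \<delta> / ?n)" .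
    also have "\<dots> = ?n + \<delta>" using n by (simp add: field_simps)
    finally show ?thesis using that by simp
  qed
  have bnd: "cmod (\<omega> z) \<le> 1" for z
    by (cases "z = c0") (simp_all add: \<omega>_def norm_divide)
  show ?thesis
    apply (rule exI[of _ "\<lambda>z. cmod (z - c0)"], rule exI[of _ 0], rule exI[of _ \<omega>], rule exI[of _ 1])
    using inv incr bnd by (auto intro!: continuous_intros)
next
  case True
  define \<gamma> where "\<gamma> = (if \<beta> = 0 then 1 else \<beta>)"
  have g: "\<gamma> \<noteq> 0" unfolding \<gamma>_def by simp
  have c: "Re (cnj \<gamma> * \<beta>) \<ge> 0"
    unfolding \<gamma>_def by (simp add: re_cnj_self)
  have incr: "Re (cnj \<gamma> * z) < Re (cnj \<gamma> * (z + of_real \<delta> * \<gamma>))" if "\<delta> > 0" for z \<delta>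
  proof -
    have "Re (cnj \<gamma> * (z + of_real \<delta> * \<gamma>)) = Re (cnj \<gamma> * z) + \<delta> * (cmod \<gamma>)^2"
      using re_cnj_self[of \<gamma>] by (simp add: algebra_simps) (metis distrib_left)
    then show ?thesis using that g by simp
  qed
  show ?thesis
    apply (rule exI[of _ "\<lambda>z. Re (cnj \<gamma> * z)"], rule exI[of _ "Re (cnj \<gamma> * \<beta>)"],
        rule exI[of _ "\<lambda>_. \<gamma>"], rule exI[of _ "cmod \<gamma>"])
    using True c incr by (auto intro!: continuous_intros simp: algebra_simps)
qed

lemma norm_smult_c: "norm (c *s (x::complex^'n::finite)) = cmod c * norm x"
proof -
  have "norm (c *s x) = L2_set (\<lambda>i. cmod c * norm (x$i)) UNIV"
    unfolding norm_vec_def by (simp add: norm_mult)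
  also have "\<dots> = cmod c * L2_set (\<lambda>i. norm (x$i)) UNIV"
    by (rule L2_set_right_distrib[symmetric]) simp
  finally show ?thesis unfolding norm_vec_def .
qed

lemma norm_le_l1_c: "norm (x::complex^'n::finite) \<le> (\<Sum>i\<in>UNIV. cmod (x$i))"
  by (simp add: norm_vec_def L2_set_le_sum)

lemma Vk_scale: "y \<in> Vk idx k \<Longrightarrow> c *s y \<in> Vk idx k"
  unfolding Vk_def by simp

lemma Vk_add: "y \<in> Vk idx k \<Longrightarrow> z \<in> Vk idx k \<Longrightarrow> y + z \<in> Vk idx k"
  unfolding Vk_def by simp

lemma Vk_closed: "closed (Vk idx k)"
  unfolding Vk_def by (rule closed_substandard_cart)

lemma normalize_c:
  assumes "(y::complex^'n::finite) \<noteq> 0"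
  shows "norm (of_real (1 / norm y) *s y) = 1"
  using assms by (simp add: norm_smult_c norm_divide)

lemma ratio_scale:
  fixes y :: "complex^'n::finite"
  assumes "c \<noteq> 0"
  shows "(c *s y)$q / (c *s y)$p = y$q / y$p"
proof (cases "y$p = 0")
  case True then show ?thesis by simp
next
  case False then show ?thesis using assms by (simp add: field_simps)
qed

lemma perturb:
  fixes z :: "complex^'n::finite"
  assumes z: "z \<in> Vk idx k" and q: "idx q < k" and pq: "p \<noteq> q" and zp: "z$p \<noteq> 0"
    and e: "e > 0"
    and incr: "\<forall>\<rho> \<delta>. \<delta> > 0 \<longrightarrow> \<phi> \<rho> < \<phi> (\<rho> + of_real \<delta> * \<omega> \<rho>)"
    and bnd: "\<forall>\<rho>. cmod (\<omega> \<rho>) \<le> Kb"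
  shows "\<exists>z'. dist z' z < e \<and> z' \<in> Vk idx k \<and> z'$p = z$p \<and>
           \<phi> (z$q / z$p) < \<phi> (z'$q / z'$p)"
proof -
  define \<rho> where "\<rho> = z$q / z$p"
  have Kb: "Kb \<ge> 0" using bnd norm_ge_zero order_trans by metis
  define \<delta> where "\<delta> = e / (2 * (Kb + 1) * (cmod (z$p) + 1))"
  have d: "\<delta> > 0" unfolding \<delta>_def using e Kb by (simp add: field_simps add_pos_nonneg)
  define a where "a = of_real \<delta> * \<omega> \<rho> * z$p"
  define v :: "complex^'n" where "v = (\<chi> i. if i = q then a else 0)"
  have "cmod a \<le> \<delta> * Kb * cmod (z$p)"
    unfolding a_def using d bnd by (simp add: norm_mult mult_right_mono)
  also have "\<dots> < e"
  proof -
    have "Kb * cmod (z$p) \<le> (Kb + 1) * (cmod (z$p) + 1)"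
      using Kb by (intro mult_mono) simp_all
    then have "\<delta> * Kb * cmod (z$p) \<le> \<delta> * ((Kb + 1) * (cmod (z$p) + 1))"
      using mult_left_mono[of _ _ \<delta>] d by (simp add: mult.assoc)
    also have "\<dots> = e / 2"
    proof -
      have "cmod (z$p) + 1 > 0" using norm_ge_zero[of "z$p"] by linarith
      then have pos: "(Kb + 1) * (cmod (z$p) + 1) > 0" using Kb by (intro mult_pos_pos) simp_all
      then show ?thesis unfolding \<delta>_def by (simp add: field_simps)
    qed
    finally show ?thesis using e by simp
  qed
  finally have ae: "cmod a < e" .
  have nv: "norm v \<le> cmod a"
  proof -
    have "norm v \<le> (\<Sum>i\<in>UNIV. cmod (v$i))" by (rule norm_le_l1_c)
    also have "(\<Sum>i\<in>UNIV. cmod (v$i)) = (\<Sum>i\<in>UNIV. if i = q then cmod a else 0)"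
      unfolding v_def by (rule sum.cong) simp_all
    also have "\<dots> = cmod a" by simp
    finally show ?thesis .
  qed
  define z' where "z' = z + v"
  have vV: "v \<in> Vk idx k" unfolding Vk_def v_def using q by auto
  have "dist z' z < e" unfolding z'_def dist_norm using nv ae by simp
  moreover have "z' \<in> Vk idx k" unfolding z'_def by (rule Vk_add[OF z vV])
  moreover have zp': "z'$p = z$p" unfolding z'_def v_def using pq by simp
  moreover have "z'$q / z'$p = \<rho> + of_real \<delta> * \<omega> \<rho>"
    unfolding zp' unfolding z'_def v_def a_def \<rho>_def using zp by (simp add: field_simps)
  ultimately show ?thesis using incr d unfolding \<rho>_def by metis
qed

lemma ratio_step:
  fixes M :: "complex^'n::finite^'n"
  assumes up: "\<And>i j. idx j < idx i \<Longrightarrow> M$i$j = 0" and inj: "inj idx"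
    and pq: "idx p = Suc (idx q)" and y: "y \<in> Vk idx (Suc (idx p))" and yp: "y$p \<noteq> 0"
    and nzp: "M$p$p \<noteq> 0"
  shows "(M *v y)$q / (M *v y)$p = (M$q$q / M$p$p) * (y$q / y$p) + M$q$p / M$p$p"
proof -
  have t: "(M *v y)$p = M$p$p * y$p" by (rule tri_coord_top[OF up inj y])
  have n: "(M *v y)$q = M$q$q * y$q + M$q$p * y$p" by (rule tri_coord_next[OF up inj pq y])
  show ?thesis unfolding t n using yp nzp by (simp add: field_simps)
qed

lemma Vprev:
  assumes inj: "inj idx" and y: "y \<in> Vk idx (Suc (idx p))" and yp: "y$p = 0"
  shows "y \<in> Vk idx (idx p)"
  unfolding Vk_def
proof (intro CollectI allI impI)
  fix i assume "idx p \<le> idx i"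
  show "y$i = 0"
  proof (cases "i = p")
    case True then show ?thesis using yp by simp
  next
    case False
    then have "idx i \<noteq> idx p" using inj by (simp add: inj_eq)
    then have "Suc (idx p) \<le> idx i" using \<open>idx p \<le> idx i\<close> by simp
    then show ?thesis using y unfolding Vk_def by simp
  qed
qed

lemma g_cont:
  fixes K :: "(complex^'n::finite) set"
  assumes \<phi>c: "continuous_on UNIV \<phi>" and Kp: "\<And>y. y \<in> K \<Longrightarrow> y$p \<noteq> 0"
  shows "continuous_on K (\<lambda>y. \<phi> (y$q / y$p))"
proof -
  have "continuous_on K (\<lambda>y. y$q / y$p)"
    using Kp by (intro continuous_on_divide continuous_on_component continuous_on_id) auto
  then show ?thesis using continuous_on_compose2[OF \<phi>c] by blast
qed

lemma phi_obtain:
  fixes \<alpha> \<beta> :: complex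
  assumes a: "cmod \<alpha> = 1"
  obtains \<phi> :: "complex \<Rightarrow> real" and c :: real and \<omega> :: "complex \<Rightarrow> complex" and Kb :: real
  where "continuous_on UNIV \<phi>" "c \<ge> 0"
     "\<forall>z. \<phi> (\<alpha> * z + \<beta>) = \<phi> z + c" "\<forall>z \<delta>. \<delta> > 0 \<longrightarrow> \<phi> z < \<phi> (z + of_real \<delta> * \<omega> z)"
     "\<forall>z. cmod (\<omega> z) \<le> Kb"
  using phi_exists[OF a, of \<beta>] by blast

lemma caseA:
  fixes M :: "complex^'n::finite^'n" and U F :: "(complex^'n) set"
  assumes up: "\<And>i j. idx j < idx i \<Longrightarrow> M$i$j = 0" and inj: "inj idx"
    and pq: "idx p = Suc (idx q)" and md: "cmod (M$q$q) = cmod (M$p$p)" and nzp: "M$p$p \<noteq> 0"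
    and Uo: "open U"
    and Fcl: "closed (insert 0 F)" and F0: "0 \<notin> F" and Fc: "\<And>y c. y \<in> F \<Longrightarrow> c \<noteq> 0 \<Longrightarrow> c *s y \<in> F"
    and UF: "U \<subseteq> F" and MF: "\<And>y. y \<in> F \<Longrightarrow> M *v y \<in> U"
    and ne: "U \<inter> Vk idx (Suc (idx p)) \<noteq> {}" and emp: "F \<inter> Vk idx (idx p) = {}"
  shows False
proof -
  define Vj where "Vj = Vk idx (Suc (idx p))"
  define \<alpha> where "\<alpha> = M$q$q / M$p$p"
  define \<beta> where "\<beta> = M$q$p / M$p$p"
  have a1: "cmod \<alpha> = 1" using md nzp unfolding \<alpha>_def by (simp add: norm_divide)
  obtain \<phi> :: "complex \<Rightarrow> real" and c :: real and \<omega> :: "complex \<Rightarrow> complex" and Kb :: real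
    where \<phi>c: "continuous_on UNIV \<phi>" and c0: "c \<ge> 0"
    and \<phi>s: "\<forall>z. \<phi> (\<alpha> * z + \<beta>) = \<phi> z + c"
    and incr: "\<forall>z \<delta>. \<delta> > 0 \<longrightarrow> \<phi> z < \<phi> (z + of_real \<delta> * \<omega> z)"
    and bnd: "\<forall>z. cmod (\<omega> z) \<le> Kb"
    by (rule phi_obtain[OF a1, of \<beta>])
  define g where "g y = \<phi> (y$q / y$p)" for y :: "complex^'n"
  have step: "g (M *v y) = g y + c" if "y \<in> Vj" "y$p \<noteq> 0" for y
  proof -
    have "(M *v y)$q / (M *v y)$p = \<alpha> * (y$q / y$p) + \<beta>"
      unfolding \<alpha>_def \<beta>_def by (rule ratio_step[OF up inj pq that[unfolded Vj_def] nzp])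
    then show ?thesis unfolding g_def by (simp only: \<phi>s)
  qed
  define K where "K = (insert 0 F \<inter> Vj) \<inter> sphere 0 1"
  have Kmem: "y \<in> K \<longleftrightarrow> y \<in> F \<and> y \<in> Vj \<and> norm y = 1" for y
    unfolding K_def by auto
  have Kc: "compact K" unfolding K_def Vj_def
    by (intro closed_Int_compact closed_Int Fcl Vk_closed compact_sphere)
  have Kp: "y$p \<noteq> 0" if "y \<in> K" for y
  proof
    assume yp: "y$p = 0"
    have yF: "y \<in> F" and yV: "y \<in> Vj" using that Kmem by simp_all
    have "y \<in> Vk idx (idx p)" by (rule Vprev[OF inj yV[unfolded Vj_def] yp])
    with yF have "y \<in> F \<inter> Vk idx (idx p)" by (rule IntI)
    then show False using emp by simp
  qed
  have norm_K: "\<exists>w1\<in>K. g w1 = g w" if "w \<in> F" "w \<in> Vj" for w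
  proof -
    have w0: "w \<noteq> 0" using that F0 by auto
    let ?c = "of_real (1 / norm w) :: complex"
    have c: "?c \<noteq> 0" using w0 by simp
    have mem: "?c *s w \<in> K" unfolding Kmem
      using Fc[OF that(1) c] Vk_scale[of w idx "Suc (idx p)" ?c] that(2) normalize_c[OF w0]
      unfolding Vj_def by simp
    have "g (?c *s w) = g w" unfolding g_def using ratio_scale[OF c] by simp
    from this mem show ?thesis by (rule bexI)
  qed
  have Kne: "K \<noteq> {}"
  proof -
    from ne obtain u where "u \<in> U \<inter> Vk idx (Suc (idx p))" by (metis ex_in_conv)
    then have u: "u \<in> F" "u \<in> Vj" using UF unfolding Vj_def by auto
    from norm_K[OF u] obtain w1 where "w1 \<in> K" ..
    then show ?thesis by (metis empty_iff)
  qed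
  have gc: "continuous_on K g" unfolding g_def by (rule g_cont[OF \<phi>c Kp])
  from continuous_attains_sup[OF Kc Kne gc] obtain y0 where y0: "y0 \<in> K" and y0m: "\<forall>y\<in>K. g y \<le> g y0" ..
  have bound: "g w \<le> g y0" if "w \<in> F" "w \<in> Vj" for w
  proof -
    from norm_K[OF that] obtain w1 where "w1 \<in> K" "g w1 = g w" ..
    then show ?thesis using y0m by metis
  qed
  have y0F: "y0 \<in> F" and y0V: "y0 \<in> Vj" using y0 Kmem by simp_all
  have y0p: "y0$p \<noteq> 0" by (rule Kp[OF y0])
  define z where "z = M *v y0"
  have zU: "z \<in> U" unfolding z_def by (rule MF[OF y0F])
  have zF: "z \<in> F" using zU UF by (rule subsetD[rotated])
  have zV: "z \<in> Vj" unfolding z_def Vj_def by (rule tri_Vk_inv[OF up y0V[unfolded Vj_def]])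
  have gz: "g z = g y0 + c" unfolding z_def by (rule step[OF y0V y0p])
  have zp: "z$p \<noteq> 0" unfolding z_def
    using tri_coord_top[OF up inj y0V[unfolded Vj_def]] y0p nzp by simp
  show False
  proof (cases "c > 0")
    case True
    have "g z \<le> g y0" by (rule bound[OF zF zV])
    then show False using gz True by simp
  next
    case False
    then have c00: "c = 0" using c0 by simp
    obtain e where e: "e > 0" "ball z e \<subseteq> U" using Uo zU open_contains_ball by metis
    have qlt: "idx q < Suc (idx p)" using pq by simp
    have pqn: "p \<noteq> q" using pq by auto
    from perturb[OF zV[unfolded Vj_def] qlt pqn zp e(1) incr bnd] obtain z' where
      z': "dist z' z < e \<and> z' \<in> Vk idx (Suc (idx p)) \<and> z'$p = z$p \<and>
      \<phi> (z$q / z$p) < \<phi> (z'$q / z'$p)" ..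
    have "z' \<in> ball z e" using z' by (simp add: dist_commute)
    then have "z' \<in> U" using e(2) by (rule subsetD[rotated])
    then have "z' \<in> F" using UF by (rule subsetD[rotated])
    then have "g z' \<le> g y0" using bound z' unfolding Vj_def by simp
    moreover have "g z < g z'" using z' unfolding g_def by (elim conjE) assumption
    ultimately show False using gz c00 by simp
  qed
qed

lemma caseB:
  fixes M :: "complex^'n::finite^'n" and U F :: "(complex^'n) set"
  assumes up: "\<And>i j. idx j < idx i \<Longrightarrow> M$i$j = 0" and inj: "inj idx"
    and pq: "idx p = Suc (idx q)" and md: "cmod (M$q$q) = cmod (M$p$p)" and nzp: "M$p$p \<noteq> 0"
    and surj: "\<And>y. y \<in> Vk idx (Suc (idx p)) \<Longrightarrow> \<exists>x\<in>Vk idx (Suc (idx p)). M *v x = y"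
    and Uo: "open U" and Uc: "\<And>y c. y \<in> U \<Longrightarrow> c \<noteq> 0 \<Longrightarrow> c *s y \<in> U"
    and Fcl: "closed (insert 0 F)"
    and UF: "U \<subseteq> F" and MF: "\<And>y. y \<in> F \<Longrightarrow> M *v y \<in> U"
    and ne: "\<exists>w. w \<in> Vk idx (Suc (idx p)) \<and> w \<noteq> 0 \<and> w \<notin> U"
    and sub: "\<And>y. y \<in> Vk idx (idx p) \<Longrightarrow> y \<noteq> 0 \<Longrightarrow> y \<in> U"
  shows False
proof -
  define Vj where "Vj = Vk idx (Suc (idx p))"
  define \<alpha> where "\<alpha> = M$q$q / M$p$p"
  define \<beta> where "\<beta> = M$q$p / M$p$p"
  have a1: "cmod \<alpha> = 1" using md nzp unfolding \<alpha>_def by (simp add: norm_divide)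
  obtain \<phi> :: "complex \<Rightarrow> real" and c :: real and \<omega> :: "complex \<Rightarrow> complex" and Kb :: real
    where \<phi>c: "continuous_on UNIV \<phi>" and c0: "c \<ge> 0"
    and \<phi>s: "\<forall>z. \<phi> (\<alpha> * z + \<beta>) = \<phi> z + c"
    and incr: "\<forall>z \<delta>. \<delta> > 0 \<longrightarrow> \<phi> z < \<phi> (z + of_real \<delta> * \<omega> z)"
    and bnd: "\<forall>z. cmod (\<omega> z) \<le> Kb"
    by (rule phi_obtain[OF a1, of \<beta>])
  define g where "g y = \<phi> (y$q / y$p)" for y :: "complex^'n"
  have step: "g (M *v y) = g y + c" if "y \<in> Vj" "y$p \<noteq> 0" for y
  proof -
    have "(M *v y)$q / (M *v y)$p = \<alpha> * (y$q / y$p) + \<beta>"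
      unfolding \<alpha>_def \<beta>_def by (rule ratio_step[OF up inj pq that[unfolded Vj_def] nzp])
    then show ?thesis unfolding g_def by (simp only: \<phi>s)
  qed
  define K where "K = (Vj - U) \<inter> sphere 0 1"
  have Kmem: "y \<in> K \<longleftrightarrow> y \<in> Vj \<and> y \<notin> U \<and> norm y = 1" for y
    unfolding K_def by auto
  have Kc: "compact K" unfolding K_def Vj_def
    by (intro closed_Int_compact closed_Diff Uo Vk_closed compact_sphere)
  have Kp: "y$p \<noteq> 0" if "y \<in> K" for y
  proof
    assume yp: "y$p = 0"
    have yV: "y \<in> Vj" and yU: "y \<notin> U" and yn: "norm y = 1" using that Kmem by simp_all
    have "y \<in> Vk idx (idx p)" by (rule Vprev[OF inj yV[unfolded Vj_def] yp])
    moreover have "y \<noteq> 0" using yn by auto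
    ultimately have "y \<in> U" by (rule sub)
    then show False using yU by simp
  qed
  have norm_K: "\<exists>w1\<in>K. g w1 = g w" if "w \<in> Vj" "w \<noteq> 0" "w \<notin> U" for w
  proof -
    let ?c = "of_real (1 / norm w) :: complex"
    have c: "?c \<noteq> 0" using that by simp
    have nU: "?c *s w \<notin> U"
    proof
      assume cw: "?c *s w \<in> U"
      have nz: "(of_real (norm w) :: complex) \<noteq> 0" using that(2) by simp
      have A: "of_real (norm w) *s (?c *s w) \<in> U" by (rule Uc[OF cw nz])
      have eq: "of_real (norm w) *s (?c *s w) = w" using that
        by (simp add: vector_smult_assoc)
      from A have "w \<in> U" unfolding eq .
      then show False using that(3) by (rule notE[rotated])
    qed
    have mem: "?c *s w \<in> K" unfolding Kmem
      using nU Vk_scale[of w idx "Suc (idx p)" ?c] that(1) normalize_c[OF that(2)]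
      unfolding Vj_def by simp
    have "g (?c *s w) = g w" unfolding g_def using ratio_scale[OF c] by simp
    from this mem show ?thesis by (rule bexI)
  qed
  have Kne: "K \<noteq> {}"
  proof -
    from ne obtain w where w: "w \<in> Vj" "w \<noteq> 0" "w \<notin> U" unfolding Vj_def by (elim exE conjE)
    from norm_K[OF w] obtain w1 where "w1 \<in> K" ..
    then show ?thesis by (metis empty_iff)
  qed
  have gc: "continuous_on K g" unfolding g_def by (rule g_cont[OF \<phi>c Kp])
  have pre: "\<exists>x. x \<in> Vj \<and> x \<noteq> 0 \<and> x \<notin> insert 0 F \<and> x$p \<noteq> 0 \<and> g y = g x + c" if "y \<in> K" for y
  proof -
    have yV: "y \<in> Vj" and yU: "y \<notin> U" and yn: "norm y = 1" using that Kmem by simp_all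
    from surj[OF yV[unfolded Vj_def]] obtain x where x: "x \<in> Vj" "M *v x = y"
      unfolding Vj_def by (elim bexE)
    have x0: "x \<noteq> 0" using x yn by auto
    have xF: "x \<notin> insert 0 F"
    proof
      assume "x \<in> insert 0 F"
      then have "x \<in> F" using x0 by simp
      then have "y \<in> U" using MF x(2) by metis
      then show False using yU by simp
    qed
    have "y$p = M$p$p * x$p" using tri_coord_top[OF up inj x(1)[unfolded Vj_def]] x(2) by simp
    then have xp: "x$p \<noteq> 0" using Kp[OF that] by auto
    have "g y = g x + c" using step[OF x(1) xp] x(2) by simp
    then show ?thesis using x(1) x0 xF xp by blast
  qed
  show False
  proof (cases "c > 0")
    case True
    from continuous_attains_inf[OF Kc Kne gc] obtain y0 where y0: "y0 \<in> K" and y0m: "\<forall>y\<in>K. g y0 \<le> g y" ..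
    from pre[OF y0] obtain x where x: "x \<in> Vj" "x \<noteq> 0" "x \<notin> insert 0 F" "g y0 = g x + c"
      by (elim exE conjE)
    have "x \<notin> U" using x(3) UF by auto
    from norm_K[OF x(1,2) this] obtain w1 where "w1 \<in> K" "g w1 = g x" ..
    then have "g y0 \<le> g x" using y0m by metis
    then show False using x(4) True by simp
  next
    case False
    then have c00: "c = 0" using c0 by simp
    from continuous_attains_sup[OF Kc Kne gc] obtain y0 where y0: "y0 \<in> K" and y0m: "\<forall>y\<in>K. g y \<le> g y0" ..
    from pre[OF y0] obtain x where x: "x \<in> Vj" "x \<noteq> 0" "x \<notin> insert 0 F" "x$p \<noteq> 0" "g y0 = g x + c"
      by (elim exE conjE)
    have op: "open (- insert 0 F)" using Fcl by (simp add: open_Compl)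
    obtain e where e: "e > 0" "ball x e \<subseteq> - insert 0 F" using op x(3) open_contains_ball
      by (metis ComplI)
    have qlt: "idx q < Suc (idx p)" using pq by simp
    have pqn: "p \<noteq> q" using pq by auto
    from perturb[OF x(1)[unfolded Vj_def] qlt pqn x(4) e(1) incr bnd] obtain x' where
      x': "dist x' x < e \<and> x' \<in> Vk idx (Suc (idx p)) \<and> x'$p = x$p \<and>
      \<phi> (x$q / x$p) < \<phi> (x'$q / x'$p)" ..
    have "x' \<in> ball x e" using x' by (simp add: dist_commute)
    then have "x' \<in> - insert 0 F" using e(2) by (rule subsetD[rotated])
    then have x'0: "x' \<noteq> 0" and x'F: "x' \<notin> F" by auto
    have x'U: "x' \<notin> U" using x'F UF by auto
    have x'V: "x' \<in> Vj" using x' unfolding Vj_def by simp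
    from norm_K[OF x'V x'0 x'U] obtain w1 where "w1 \<in> K" "g w1 = g x'" ..
    then have "g x' \<le> g y0" using y0m by metis
    moreover have "g x < g x'" using x' unfolding g_def by (elim conjE) assumption
    ultimately show False using x(5) c00 by simp
  qed
qed

lemma Vk0: "y \<in> Vk idx 0 \<Longrightarrow> y = 0"
  unfolding Vk_def by (simp add: Finite_Cartesian_Product.vec_eq_iff)

lemma VkN:
  assumes b: "bij_betw idx (UNIV::'n::finite set) {0..<CARD('n)}"
  shows "(y::complex^'n) \<in> Vk idx CARD('n)"
  unfolding Vk_def
proof (intro CollectI allI impI)
  fix i assume "CARD('n) \<le> idx i"
  then show "y$i = 0" using bij_idx_facts(2)[OF b, of i] by simp
qed

lemma Vk1:
  assumes inj: "inj idx" and p0: "idx p0 = 0" and y: "y \<in> Vk idx 1"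
  shows "y = y$p0 *s (\<chi> i. if i = p0 then 1 else 0)"
proof -
  have "y$i = (y$p0 *s (\<chi> i. if i = p0 then 1 else 0))$i" for i
  proof (cases "i = p0")
    case True then show ?thesis by simp
  next
    case False
    then have "idx i \<noteq> idx p0" using inj by (simp add: inj_eq)
    then have "idx i \<noteq> 0" using p0 by simp
    then have "y$i = 0" using y unfolding Vk_def by simp
    then show ?thesis using False by simp
  qed
  then show ?thesis unfolding Finite_Cartesian_Product.vec_eq_iff by (rule allI)
qed

lemma core:
  fixes M :: "complex^'n::finite^'n" and U F :: "(complex^'n) set"
  assumes up: "\<And>i j. idx j < idx i \<Longrightarrow> M$i$j = 0"
    and b: "bij_betw idx (UNIV::'n set) {0..<CARD('n)}"
    and nz: "\<And>i. M$i$i \<noteq> 0" and md: "\<And>i j. cmod (M$i$i) = cmod (M$j$j)"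
    and Uo: "open U" and Uc: "\<And>y c. y \<in> U \<Longrightarrow> c \<noteq> 0 \<Longrightarrow> c *s y \<in> U"
    and Fcl: "closed (insert 0 F)" and F0: "0 \<notin> F" and Fc: "\<And>y c. y \<in> F \<Longrightarrow> c \<noteq> 0 \<Longrightarrow> c *s y \<in> F"
    and UF: "U \<subseteq> F" and MF: "\<And>y. y \<in> F \<Longrightarrow> M *v y \<in> U"
    and Une: "U \<noteq> {}" and Upr: "\<exists>y. y \<noteq> 0 \<and> y \<notin> U"
  shows False
proof -
  note bf = bij_idx_facts[OF b]
  have inj: "inj idx" by (rule bf(1))
  have N0: "0 < CARD('n)" by simp
  obtain p0 where p0: "idx p0 = 0" using bf(3)[OF N0] by blast
  define e0 :: "complex^'n" where "e0 = (\<chi> i. if i = p0 then 1 else 0)"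
  have U0: "0 \<notin> U" using UF F0 by auto
  have pick: "\<exists>p q. idx p = Suc (idx q) \<and> Suc (idx p) = j" if jj: "2 \<le> j" "j \<le> CARD('n)" for j
  proof -
    have "j - 1 < CARD('n)" "j - 2 < CARD('n)" using jj by simp_all
    then obtain p q where p: "idx p = j - 1" and q: "idx q = j - 2" using bf(3) by metis
    show ?thesis using p q jj by (intro exI[of _ p] exI[of _ q]) simp
  qed
  show False
  proof (cases "e0 \<in> U")
    case False
    define P where "P k = (U \<inter> Vk idx k \<noteq> {})" for k
    have PN: "P CARD('n)" unfolding P_def using Une VkN[OF b] by auto
    define j where "j = (LEAST k. P k)"
    have Pj: "P j" unfolding j_def by (rule LeastI[of P, OF PN])
    have jN: "j \<le> CARD('n)" unfolding j_def by (rule Least_le[of P, OF PN])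
    have nP: "\<not> P k" if "k < j" for k using not_less_Least[of k P] that unfolding j_def by simp
    have j0: "j \<noteq> 0"
    proof
      assume "j = 0"
      then obtain y where "y \<in> U" "y \<in> Vk idx 0" using Pj unfolding P_def by blast
      then show False using Vk0 U0 by metis
    qed
    have j1: "j \<noteq> 1"
    proof
      assume "j = 1"
      then obtain y where y: "y \<in> U" "y \<in> Vk idx 1" using Pj unfolding P_def by blast
      have ye: "y = y$p0 *s e0" unfolding e0_def by (rule Vk1[OF inj p0 y(2)])
      have "y$p0 \<noteq> 0"
      proof
        assume "y$p0 = 0"
        then have "y = 0" using ye by simp
        then show False using y U0 by simp
      qed
      then have "(1 / y$p0) *s y \<in> U" using Uc y(1) by simp
      moreover have "(1 / y$p0) *s y = e0" using \<open>y$p0 \<noteq> 0\<close> ye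
        by (metis (no_types, lifting) nonzero_divide_eq_eq vector_smult_assoc vector_smult_lid)
      ultimately show False using False by simp
    qed
    obtain p q where pq: "idx p = Suc (idx q)" "Suc (idx p) = j" using pick[of j] j0 j1 jN by force
    have emp: "F \<inter> Vk idx (idx p) = {}"
    proof (rule ccontr)
      assume "F \<inter> Vk idx (idx p) \<noteq> {}"
      then obtain y where y: "y \<in> F" "y \<in> Vk idx (idx p)" by blast
      have "M *v y \<in> U" by (rule MF[OF y(1)])
      moreover have "M *v y \<in> Vk idx (idx p)" by (rule tri_Vk_inv[OF up y(2)])
      ultimately have "P (idx p)" unfolding P_def by blast
      moreover have "idx p < j" using pq by simp
      ultimately show False using nP by blast
    qed
    have ne: "U \<inter> Vk idx (Suc (idx p)) \<noteq> {}" using Pj pq unfolding P_def by simp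
    show False
      by (rule caseA[OF up inj pq(1) md nz Uo Fcl F0 Fc UF MF ne emp])
  next
    case True
    define P where "P k = (\<exists>w. w \<in> Vk idx k \<and> w \<noteq> 0 \<and> w \<notin> U)" for k
    have PN: "P CARD('n)" unfolding P_def using Upr VkN[OF b] by blast
    define j where "j = (LEAST k. P k)"
    have Pj: "P j" unfolding j_def by (rule LeastI[of P, OF PN])
    have jN: "j \<le> CARD('n)" unfolding j_def by (rule Least_le[of P, OF PN])
    have nP: "\<not> P k" if "k < j" for k using not_less_Least[of k P] that unfolding j_def by simp
    have j0: "j \<noteq> 0"
    proof
      assume "j = 0"
      then obtain w where "w \<in> Vk idx 0" "w \<noteq> 0" using Pj unfolding P_def by blast
      then show False using Vk0 by metis
    qed
    have j1: "j \<noteq> 1"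
    proof
      assume "j = 1"
      then obtain w where w: "w \<in> Vk idx 1" "w \<noteq> 0" "w \<notin> U" using Pj unfolding P_def by blast
      have we: "w = w$p0 *s e0" unfolding e0_def by (rule Vk1[OF inj p0 w(1)])
      have "w$p0 \<noteq> 0"
      proof
        assume "w$p0 = 0"
        then have "w = 0" using we by simp
        then show False using w by simp
      qed
      then have "w \<in> U" using Uc[OF True \<open>w$p0 \<noteq> 0\<close>] we by simp
      then show False using w by simp
    qed
    obtain p q where pq: "idx p = Suc (idx q)" "Suc (idx p) = j" using pick[of j] j0 j1 jN by force
    have sub: "y \<in> U" if "y \<in> Vk idx (idx p)" "y \<noteq> 0" for y
    proof (rule ccontr)
      assume "y \<notin> U"
      then have "P (idx p)" unfolding P_def using that by blast
      moreover have "idx p < j" using pq by simp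
      ultimately show False using nP by blast
    qed
    have ne: "\<exists>w. w \<in> Vk idx (Suc (idx p)) \<and> w \<noteq> 0 \<and> w \<notin> U" using Pj pq unfolding P_def by simp
    have surj: "\<exists>x\<in>Vk idx (Suc (idx p)). M *v x = y" if "y \<in> Vk idx (Suc (idx p))" for y
      by (rule tri_Vk_surj[OF up b nz that])
    show False
      by (rule caseB[OF up inj pq(1) md nz surj Uo Uc Fcl UF MF ne sub])
  qed
qed

lemma row_split:
  fixes T :: "complex^'n::finite^'n"
  shows "(T *v y)$i = T$i$i * y$i + (\<Sum>j\<in>UNIV-{i}. T$i$j * y$j)"
proof -
  have "(T *v y)$i = (\<Sum>j\<in>UNIV. T$i$j * y$j)" by (simp add: matrix_vector_mult_def)
  also have "\<dots> = T$i$i * y$i + (\<Sum>j\<in>UNIV-{i}. T$i$j * y$j)" by (simp add: sum.remove)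
  finally show ?thesis .
qed

lemma fwd_est:
  fixes T :: "complex^'n::finite^'n" and L :: "'n set"
  assumes tL: "\<And>i. i \<in> L \<Longrightarrow> t \<le> cmod (T$i$i)" and sL: "\<And>i. i \<notin> L \<Longrightarrow> cmod (T$i$i) \<le> s"
    and s0: "0 \<le> s"
    and off: "\<And>i j. i \<noteq> j \<Longrightarrow> cmod (T$i$j) \<le> \<eta>" and \<eta>0: "0 \<le> \<eta>"
    and blk: "\<And>i j. i \<notin> L \<Longrightarrow> j \<in> L \<Longrightarrow> T$i$j = 0"
    and gap: "3 * real CARD('n) * \<eta> < t - s"
    and y: "y \<noteq> 0" and le: "(\<Sum>i\<in>-L. cmod (y$i)) \<le> (\<Sum>i\<in>L. cmod (y$i))"
  shows "(\<Sum>i\<in>-L. cmod ((T *v y)$i)) < (\<Sum>i\<in>L. cmod ((T *v y)$i))"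
proof -
  define a where "a = (\<Sum>i\<in>L. cmod (y$i))"
  define b where "b = (\<Sum>i\<in>-L. cmod (y$i))"
  define N where "N = real CARD('n)"
  have ab: "(\<Sum>j\<in>UNIV. cmod (y$j)) = a + b"
    unfolding a_def b_def using sum.union_disjoint[of L "-L" "\<lambda>i. cmod (y$i)"]
    by (simp add: Un_commute)
  have b0: "0 \<le> b" unfolding b_def by (simp add: sum_nonneg)
  have a_pos: "0 < a"
  proof (rule ccontr)
    assume "\<not> 0 < a"
    moreover have "0 \<le> a" unfolding a_def by (simp add: sum_nonneg)
    ultimately have "a = 0" by simp
    then have "b = 0" using le b0 unfolding a_def b_def by simp
    then have "(\<Sum>j\<in>UNIV. cmod (y$j)) = 0" using ab \<open>a = 0\<close> by simp
    then have "\<forall>j\<in>UNIV. cmod (y$j) = 0" by (subst sum_nonneg_eq_0_iff[symmetric]) simp_all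
    then have "y = 0" by (simp add: Finite_Cartesian_Product.vec_eq_iff)
    then show False using y by simp
  qed
  have card_le: "real (card X) \<le> N" for X :: "'n set"
    unfolding N_def by (simp add: card_mono)
  have ub: "cmod ((T *v y)$i) \<le> s * cmod (y$i) + \<eta> * b" if i: "i \<notin> L" for i
  proof -
    have "cmod (\<Sum>j\<in>UNIV-{i}. T$i$j * y$j) \<le> (\<Sum>j\<in>UNIV-{i}. cmod (T$i$j * y$j))"
      by (rule norm_sum)
    also have "\<dots> \<le> (\<Sum>j\<in>UNIV-{i}. (if j \<in> L then 0 else \<eta> * cmod (y$j)))"
    proof (rule sum_mono)
      fix j assume "j \<in> UNIV - {i}"
      then have ji: "i \<noteq> j" by auto
      show "cmod (T$i$j * y$j) \<le> (if j \<in> L then 0 else \<eta> * cmod (y$j))"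
      proof (cases "j \<in> L")
        case True then show ?thesis using blk[OF i True] by simp
      next
        case False then show ?thesis using off[OF ji] by (simp add: norm_mult mult_right_mono)
      qed
    qed
    also have "\<dots> \<le> (\<Sum>j\<in>UNIV. (if j \<in> L then 0 else \<eta> * cmod (y$j)))"
      by (rule sum_mono2) (simp_all add: \<eta>0)
    also have "\<dots> = (\<Sum>j\<in>-L. \<eta> * cmod (y$j))"
      by (simp add: sum.If_cases Compl_eq_Diff_UNIV)
    also have "\<dots> = \<eta> * b" unfolding b_def by (simp add: sum_distrib_left)
    finally have r: "cmod (\<Sum>j\<in>UNIV-{i}. T$i$j * y$j) \<le> \<eta> * b" .
    have "cmod ((T *v y)$i) \<le> cmod (T$i$i * y$i) + cmod (\<Sum>j\<in>UNIV-{i}. T$i$j * y$j)"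
      unfolding row_split by (rule norm_triangle_ineq)
    also have "cmod (T$i$i * y$i) \<le> s * cmod (y$i)"
      using sL[OF i] by (simp add: norm_mult mult_right_mono)
    finally show ?thesis using r by simp
  qed
  have lb: "t * cmod (y$i) - \<eta> * (a + b) \<le> cmod ((T *v y)$i)" if i: "i \<in> L" for i
  proof -
    have "cmod (\<Sum>j\<in>UNIV-{i}. T$i$j * y$j) \<le> (\<Sum>j\<in>UNIV-{i}. cmod (T$i$j * y$j))"
      by (rule norm_sum)
    also have "\<dots> \<le> (\<Sum>j\<in>UNIV-{i}. \<eta> * cmod (y$j))"
    proof (rule sum_mono)
      fix j assume "j \<in> UNIV - {i}"
      then have ji: "i \<noteq> j" by auto
      show "cmod (T$i$j * y$j) \<le> \<eta> * cmod (y$j)"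
        using off[OF ji] by (simp add: norm_mult mult_right_mono)
    qed
    also have "\<dots> \<le> (\<Sum>j\<in>UNIV. \<eta> * cmod (y$j))"
      by (rule sum_mono2) (simp_all add: \<eta>0)
    also have "\<dots> = \<eta> * (a + b)" by (simp only: sum_distrib_left[symmetric] ab)
    finally have r: "cmod (\<Sum>j\<in>UNIV-{i}. T$i$j * y$j) \<le> \<eta> * (a + b)" .
    have "cmod (T$i$i * y$i) - cmod (\<Sum>j\<in>UNIV-{i}. T$i$j * y$j) \<le> cmod ((T *v y)$i)"
      unfolding row_split by (rule norm_diff_ineq)
    moreover have "t * cmod (y$i) \<le> cmod (T$i$i * y$i)"
      using tL[OF i] by (simp add: norm_mult mult_right_mono)
    ultimately show ?thesis using r by linarith
  qed
  have "(\<Sum>i\<in>-L. cmod ((T *v y)$i)) \<le> (\<Sum>i\<in>-L. s * cmod (y$i) + \<eta> * b)"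
    by (rule sum_mono) (rule ub, simp)
  also have "\<dots> = s * b + real (card (-L)) * (\<eta> * b)"
    unfolding b_def by (simp add: sum.distrib sum_distrib_left)
  also have "\<dots> \<le> s * b + N * (\<eta> * b)"
    using card_le[of "-L"] \<eta>0 b0 by (simp add: mult_right_mono)
  also have "\<dots> \<le> s * a + N * (\<eta> * a)"
  proof -
    have "b \<le> a" using le unfolding a_def b_def .
    moreover have "0 \<le> N * \<eta>" unfolding N_def using \<eta>0 by simp
    ultimately show ?thesis using s0 by (simp add: add_mono mult_left_mono mult.assoc[symmetric])
  qed
  also have "\<dots> < t * a - N * \<eta> * (a + a)"
  proof -
    have "3 * N * \<eta> < t - s" using gap unfolding N_def .
    then have "3 * N * \<eta> * a < (t - s) * a" using a_pos by (simp add: mult_strict_right_mono)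
    then show ?thesis by (simp add: algebra_simps)
  qed
  also have "\<dots> \<le> t * a - N * \<eta> * (a + b)"
  proof -
    have "b \<le> a" using le unfolding a_def b_def .
    moreover have "0 \<le> N * \<eta>" unfolding N_def using \<eta>0 by simp
    ultimately show ?thesis by (simp add: mult_left_mono)
  qed
  also have "\<dots> \<le> (\<Sum>i\<in>L. t * cmod (y$i) - \<eta> * (a + b))"
  proof -
    have "(\<Sum>i\<in>L. t * cmod (y$i) - \<eta> * (a + b)) = t * a - real (card L) * (\<eta> * (a + b))"
      unfolding a_def by (simp add: sum_subtractf sum_distrib_left)
    moreover have "real (card L) * (\<eta> * (a + b)) \<le> N * (\<eta> * (a + b))"
      using card_le[of L] \<eta>0 b0 a_pos by (intro mult_right_mono) simp_all
    ultimately show ?thesis by (simp add: mult.assoc)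
  qed
  also have "\<dots> \<le> (\<Sum>i\<in>L. cmod ((T *v y)$i))"
    by (rule sum_mono) (rule lb)
  finally show ?thesis .
qed

lemma diag_mult_entry:
  fixes X :: "complex^'n::finite^'n"
  shows "((\<chi> i j. if i = j then f i else 0) ** X ** (\<chi> i j. if i = j then g i else 0))$i$j = f i * X$i$j * g j"
proof -
  have l: "((\<chi> i j. if i = j then f i else 0) ** X)$i$k = f i * X$i$k" for k
  proof -
    have "((\<chi> i j. if i = j then f i else 0) ** X)$i$k = (\<Sum>l\<in>UNIV. (if i = l then f i else 0) * X$l$k)"
      by (simp add: matrix_matrix_mult_def)
    also have "\<dots> = (\<Sum>l\<in>UNIV. (if i = l then f i * X$l$k else 0))" by (rule sum.cong) auto
    also have "\<dots> = f i * X$i$k" by simp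
    finally show ?thesis .
  qed
  have "((\<chi> i j. if i = j then f i else 0) ** X ** (\<chi> i j. if i = j then g i else 0))$i$j =
     (\<Sum>k\<in>UNIV. ((\<chi> i j. if i = j then f i else 0) ** X)$i$k * (if k = j then g k else 0))"
    by (simp add: matrix_matrix_mult_def)
  also have "\<dots> = (\<Sum>k\<in>UNIV. (if k = j then f i * X$i$k * g k else 0))"
    unfolding l by (rule sum.cong) auto
  also have "\<dots> = f i * X$i$j * g j" by simp
  finally show ?thesis .
qed

lemma diag_mult_diag:
  "((\<chi> i j. if i = j then f i else 0) ** (\<chi> i j. if i = j then g i else 0) :: complex^'n::finite^'n) =
   (\<chi> i j. if i = j then f i * g i else 0)"
proof -
  have "((\<chi> i j. if i = j then f i else 0) ** (\<chi> i j. if i = j then g i else 0) :: complex^'n^'n)$i$j =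
        (if i = j then f i * g i else 0)" for i j
  proof -
    have "((\<chi> i j. if i = j then f i else 0) ** (\<chi> i j. if i = j then g i else 0) :: complex^'n^'n)$i$j
      = (\<Sum>k\<in>UNIV. (if i = k then f i else 0) * (if k = j then g k else 0))"
      by (simp add: matrix_matrix_mult_def)
    also have "\<dots> = (\<Sum>k\<in>UNIV. (if k = i then (if i = j then f i * g i else 0) else 0))"
      by (rule sum.cong) auto
    also have "\<dots> = (if i = j then f i * g i else 0)" by simp
    finally show ?thesis .
  qed
  then show ?thesis by (simp add: Finite_Cartesian_Product.vec_eq_iff)
qed

lemma fwd_scaled:
  fixes M :: "complex^'n::finite^'n"
  assumes b: "bij_betw idx (UNIV::'n set) {0..<CARD('n)}"
    and up: "\<And>i j. idx j < idx i \<Longrightarrow> M$i$j = 0"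
    and ord: "\<And>i j. idx i \<le> idx j \<Longrightarrow> cmod (M$j$j) \<le> cmod (M$i$i)"
    and neq: "\<exists>i j. cmod (M$i$i) \<noteq> cmod (M$j$j)"
  obtains S Si :: "complex^'n^'n" and L :: "'n set" where "S ** Si = hmat 1" "Si ** S = hmat 1"
    "L \<noteq> {}" "L \<noteq> UNIV"
    "\<And>y. y \<noteq> 0 \<Longrightarrow> (\<Sum>i\<in>-L. cmod (y$i)) \<le> (\<Sum>i\<in>L. cmod (y$i)) \<Longrightarrow>
       (\<Sum>i\<in>-L. cmod (((S ** M ** Si) *v y)$i)) < (\<Sum>i\<in>L. cmod (((S ** M ** Si) *v y)$i))"
proof -
  define d where "d i = cmod (M$i$i)" for i
  define s where "s = Min (range d)"
  define L where "L = {i. s < d i}"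
  have sle: "s \<le> d i" for i unfolding s_def by simp
  have "s \<in> range d" unfolding s_def by (intro Min_in) simp_all
  then obtain i0 where i0': "s = d i0" by (rule rangeE)
  have i0: "d i0 = s" using i0' by simp
  have LU: "L \<noteq> UNIV"
  proof
    assume "L = UNIV"
    then have "i0 \<in> L" by simp
    then show False using i0 unfolding L_def by simp
  qed
  obtain i1 j1 where "d i1 \<noteq> d j1" using neq unfolding d_def by blast
  then have "s < d i1 \<or> s < d j1" using sle[of i1] sle[of j1] by linarith
  then have Lne: "L \<noteq> {}" unfolding L_def by blast
  define t where "t = Min (d ` L)"
  have tle: "t \<le> d i" if "i \<in> L" for i unfolding t_def using that by simp
  have "t \<in> d ` L" unfolding t_def using Lne by (intro Min_in) simp_all
  then obtain i2 where i2': "t = d i2" "i2 \<in> L" by (rule imageE)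
  have i2: "i2 \<in> L" "d i2 = t" using i2' by simp_all
  have st: "s < t" using i2 unfolding L_def by simp
  have s0: "0 \<le> s" using i0[symmetric] unfolding d_def by simp
  have blk: "M$i$j = 0" if "i \<notin> L" "j \<in> L" for i j
  proof -
    have di: "d i = s" using that(1) sle[of i] unfolding L_def by simp
    have "\<not> idx i \<le> idx j"
    proof
      assume "idx i \<le> idx j"
      then have "d j \<le> d i" using ord unfolding d_def by simp
      then show False using di that(2) unfolding L_def by simp
    qed
    then show ?thesis using up by simp
  qed
  define N where "N = real CARD('n)"
  have N0: "N > 0" unfolding N_def by simp
  define \<eta> where "\<eta> = (t - s) / (6 * N)"
  have \<eta>0: "\<eta> > 0" unfolding \<eta>_def using st N0 by simp
  have gap: "3 * N * \<eta> < t - s" unfolding \<eta>_def using st N0 by (simp add: field_simps)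
  define Mx where "Mx = (\<Sum>i\<in>UNIV. \<Sum>j\<in>UNIV. cmod (M$i$j))"
  have Mx: "cmod (M$i$j) \<le> Mx" for i j
  proof -
    have "cmod (M$i$j) \<le> (\<Sum>j\<in>UNIV. cmod (M$i$j))"
      by (rule member_le_sum) simp_all
    also have "\<dots> \<le> Mx" unfolding Mx_def by (rule member_le_sum) (simp_all add: sum_nonneg)
    finally show ?thesis .
  qed
  have Mx0: "0 \<le> Mx" using Mx[of i0 i0] norm_ge_zero[of "M$i0$i0"] by linarith
  define \<delta> where "\<delta> = min 1 (\<eta> / (Mx + 1))"
  have d0: "0 < \<delta>" unfolding \<delta>_def using \<eta>0 Mx0 by simp
  have d1: "\<delta> \<le> 1" unfolding \<delta>_def by simp
  have dMx: "Mx * \<delta> \<le> \<eta>"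
  proof -
    have "Mx * \<delta> \<le> Mx * (\<eta> / (Mx + 1))" unfolding \<delta>_def using Mx0 by (intro mult_left_mono) simp_all
    also have "\<dots> \<le> \<eta>" using Mx0 \<eta>0 by (simp add: field_simps)
    finally show ?thesis .
  qed
  define f where "f i = (of_real ((1 / \<delta>) ^ idx i) :: complex)" for i
  define g where "g i = (of_real (\<delta> ^ idx i) :: complex)" for i
  define S :: "complex^'n^'n" where "S = (\<chi> i j. if i = j then f i else 0)"
  define Si :: "complex^'n^'n" where "Si = (\<chi> i j. if i = j then g i else 0)"
  have fg: "f i * g i = 1" "g i * f i = 1" for i
    unfolding f_def g_def using d0 by (simp_all add: power_one_over field_simps flip: of_real_mult)
  have SSi: "S ** Si = hmat 1" "Si ** S = hmat 1"
    unfolding S_def Si_def diag_mult_diag fg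
    by (simp_all add: Finite_Cartesian_Product.mat_def)
  define T' where "T' = S ** M ** Si"
  have T'e: "T'$i$j = f i * M$i$j * g j" for i j
    unfolding T'_def S_def Si_def by (rule diag_mult_entry)
  have T'd: "T'$i$i = M$i$i" for i unfolding T'e using fg[of i] by (simp add: mult.commute mult.left_commute)
  have off: "cmod (T'$i$j) \<le> \<eta>" if "i \<noteq> j" for i j
  proof (cases "idx j < idx i")
    case True then show ?thesis using up \<eta>0 T'e by simp
  next
    case False
    have "idx i \<noteq> idx j" using that bij_idx_facts(1)[OF b] by (simp add: inj_eq)
    then have "idx i < idx j" using False by simp
    define m where "m = idx j - idx i - 1"
    have m: "idx j = idx i + Suc m" unfolding m_def using \<open>idx i < idx j\<close> by simp
    have r: "(1 / \<delta>) ^ idx i * \<delta> ^ (idx i + Suc m) = \<delta> ^ Suc m"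
      using d0 by (simp add: power_add power_one_over)
    have fgj: "f i * g j = of_real (\<delta> ^ Suc m)"
      unfolding f_def g_def m of_real_mult[symmetric] r ..
    have "T'$i$j = M$i$j * (f i * g j)" unfolding T'e by (simp only: ac_simps)
    then have "cmod (T'$i$j) = cmod (M$i$j) * cmod (of_real (\<delta> ^ Suc m) :: complex)"
      unfolding fgj by (simp only: norm_mult)
    also have "cmod (of_real (\<delta> ^ Suc m) :: complex) = \<delta> ^ Suc m"
      using d0 by (simp only: norm_of_real) simp
    finally have "cmod (T'$i$j) = cmod (M$i$j) * \<delta> ^ Suc m" .
    also have "\<dots> \<le> Mx * \<delta>"
    proof (rule mult_mono)
      show "\<delta> ^ Suc m \<le> \<delta>" using d0 d1 by (simp add: power_le_one mult_left_le)
    qed (simp_all add: Mx d0 less_imp_le Mx0)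
    also have "\<dots> \<le> \<eta>" by (rule dMx)
    finally show ?thesis .
  qed
  show ?thesis
  proof (rule that[OF SSi Lne LU])
    fix y :: "complex^'n" assume y: "y \<noteq> 0" and le: "(\<Sum>i\<in>-L. cmod (y$i)) \<le> (\<Sum>i\<in>L. cmod (y$i))"
    show "(\<Sum>i\<in>-L. cmod (((S ** M ** Si) *v y)$i)) < (\<Sum>i\<in>L. cmod (((S ** M ** Si) *v y)$i))"
      unfolding T'_def[symmetric]
    proof (rule fwd_est[where t=t and s=s and \<eta>=\<eta>])
      show "\<And>i. i \<in> L \<Longrightarrow> t \<le> cmod (T'$i$i)" using tle unfolding T'd d_def by simp
      show "\<And>i. i \<notin> L \<Longrightarrow> cmod (T'$i$i) \<le> s" using sle unfolding T'd d_def L_def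
        by (simp add: not_less)
      show "\<And>i j. i \<notin> L \<Longrightarrow> j \<in> L \<Longrightarrow> T'$i$j = 0" using blk T'e by simp
      show "3 * real CARD('n) * \<eta> < t - s" using gap unfolding N_def .
    qed (simp_all add: s0 off less_imp_le[OF \<eta>0] y le)
  qed
qed

lemma mv_smult: "(A :: complex^'n::finite^'n) *v (c *s x) = c *s (A *v x)"
proof -
  have "(A *v (c *s x))$i = (c *s (A *v x))$i" for i
  proof -
    have "(A *v (c *s x))$i = (\<Sum>j\<in>UNIV. A$i$j * (c * x$j))" by (simp add: matrix_vector_mult_def)
    also have "\<dots> = c * (\<Sum>j\<in>UNIV. A$i$j * x$j)" by (simp add: sum_distrib_left ac_simps)
    finally show ?thesis by (simp add: matrix_vector_mult_def)
  qed
  then show ?thesis by (simp add: Finite_Cartesian_Product.vec_eq_iff)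
qed

lemma pline_smult:
  assumes c: "c \<noteq> 0"
  shows "pline (c *s x) = pline (x :: complex^'n::finite)"
proof
  show "pline (c *s x) \<subseteq> pline x"
  proof
    fix w assume "w \<in> pline (c *s x)"
    then obtain d where "d \<noteq> 0" "w = d *s (c *s x)" unfolding pline_def by blast
    then have "w = (d * c) *s x" "d * c \<noteq> 0" using c by (simp_all add: vector_smult_assoc)
    then show "w \<in> pline x" unfolding pline_def by blast
  qed
  show "pline x \<subseteq> pline (c *s x)"
  proof
    fix w assume "w \<in> pline x"
    then obtain d where d: "d \<noteq> 0" "w = d *s x" unfolding pline_def by blast
    then have "w = (d / c) *s (c *s x)" "d / c \<noteq> 0" using c by (simp_all add: vector_smult_assoc)
    then show "w \<in> pline (c *s x)" unfolding pline_def by blast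
  qed
qed

lemma pline_self: "v \<in> pline v"
  unfolding pline_def by (rule CollectI, rule exI[of _ 1]) simp

lemma pline_memD: "w \<in> pline v \<Longrightarrow> \<exists>c. c \<noteq> 0 \<and> w = c *s v"
  unfolding pline_def by blast

lemma pline_eqD:
  assumes "pline u = pline v"
  shows "\<exists>c. c \<noteq> 0 \<and> u = c *s v"
  using pline_memD[of u v] pline_self[of u] assms by simp

lemma proj_map_pline:
  fixes A :: "complex^'n::finite^'n"
  shows "proj_map A (pline v) = pline (A *v v)"
proof -
  have "\<exists>w. w \<in> pline v" using pline_self by blast
  then have "(SOME w. w \<in> pline v) \<in> pline v" by (rule someI_ex)
  then obtain c where c: "c \<noteq> 0" "(SOME w. w \<in> pline v) = c *s v" using pline_memD by blast
  show ?thesis unfolding proj_map_def c(2) mv_smult pline_smult[OF c(1)] ..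
qed

lemma openin_proj: "openin proj_top (U::(complex^'n::finite) set set) \<longleftrightarrow> U \<subseteq> proj_space \<and> open {v. v \<noteq> 0 \<and> pline v \<in> U}"
  by (simp only: proj_top_def topology_inverse'[OF istopology_proj])

lemma topspace_proj: "topspace proj_top = proj_space"
proof
  show "topspace proj_top \<subseteq> proj_space"
    unfolding topspace_def using openin_proj by blast
  have eq: "{v. v \<noteq> 0 \<and> pline v \<in> proj_space} = - {0::complex^'n}"
    unfolding proj_space_def by auto
  have "openin proj_top (proj_space :: (complex^'n) set set)"
    unfolding openin_proj eq by (simp add: open_Compl)
  then show "proj_space \<subseteq> topspace proj_top" by (rule openin_subset)
qed

definition hset :: "((complex^'n::finite) \<Rightarrow> bool) \<Rightarrow> (complex^'n) set set" where
  "hset Q = {pline v | v. v \<noteq> 0 \<and> Q v}"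

definition homog :: "((complex^'n::finite) \<Rightarrow> bool) \<Rightarrow> bool" where
  "homog Q \<longleftrightarrow> (\<forall>w c. w \<noteq> 0 \<longrightarrow> c \<noteq> 0 \<longrightarrow> Q (c *s w) = Q w)"

lemma hset_mem:
  assumes h: "homog Q" and v: "v \<noteq> 0"
  shows "pline v \<in> hset Q \<longleftrightarrow> Q v"
proof
  assume "pline v \<in> hset Q"
  then obtain w where w: "w \<noteq> 0" "Q w" "pline v = pline w" unfolding hset_def by blast
  then obtain c where c: "c \<noteq> 0" "v = c *s w" using pline_eqD by blast
  then show "Q v" using h w unfolding homog_def by simp
next
  assume "Q v" then show "pline v \<in> hset Q" unfolding hset_def using v by blast
qed

lemma hset_pre:
  assumes h: "homog Q"
  shows "{v. v \<noteq> 0 \<and> pline v \<in> hset Q} = {v. v \<noteq> 0 \<and> Q v}"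
  using hset_mem[OF h] by blast

lemma hset_sub: "hset Q \<subseteq> proj_space"
  unfolding hset_def proj_space_def by blast

lemma hset_open:
  assumes h: "homog Q" and o: "open {v. v \<noteq> 0 \<and> Q v}"
  shows "openin proj_top (hset Q)"
  unfolding openin_proj hset_pre[OF h] using hset_sub o by blast

lemma homog_not: "homog Q \<Longrightarrow> homog (\<lambda>v. \<not> Q v)"
  unfolding homog_def by simp

lemma hset_compl:
  assumes h: "homog Q"
  shows "proj_space - hset Q = hset (\<lambda>v. \<not> Q v)"
proof
  show "proj_space - hset Q \<subseteq> hset (\<lambda>v. \<not> Q v)"
  proof
    fix x assume x: "x \<in> proj_space - hset Q"
    then obtain v where v: "v \<noteq> 0" "x = pline v" unfolding proj_space_def by blast
    then have "\<not> Q v" using x hset_mem[OF h v(1)] by simp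
    then show "x \<in> hset (\<lambda>v. \<not> Q v)" unfolding hset_def using v by blast
  qed
  show "hset (\<lambda>v. \<not> Q v) \<subseteq> proj_space - hset Q"
  proof
    fix x assume x: "x \<in> hset (\<lambda>v. \<not> Q v)"
    then obtain v where v: "v \<noteq> 0" "\<not> Q v" "x = pline v" unfolding hset_def by blast
    then have "x \<notin> hset Q" using hset_mem[OF h v(1)] by simp
    moreover have "x \<in> proj_space" using x hset_sub by blast
    ultimately show "x \<in> proj_space - hset Q" by simp
  qed
qed

lemma hset_closed:
  assumes h: "homog Q" and o: "open {v. v \<noteq> 0 \<and> \<not> Q v}"
  shows "closedin proj_top (hset Q)"
  unfolding closedin_def topspace_proj hset_compl[OF h]
  using hset_sub hset_open[OF homog_not[OF h] o] by blast

lemma det_mat_c: "hdet (hmat c :: complex^'n::finite^'n) = c ^ CARD('n)"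
proof -
  have "hdet (hmat c :: complex^'n^'n) = (\<Prod>i\<in>UNIV. (hmat c :: complex^'n^'n)$i$i)"
    by (rule det_diagonal) (simp add: Finite_Cartesian_Product.mat_def)
  also have "\<dots> = (\<Prod>i\<in>(UNIV::'n set). c)" by (simp add: Finite_Cartesian_Product.mat_def)
  also have "\<dots> = c ^ CARD('n)" by simp
  finally show ?thesis .
qed

lemma mat_c_mult_vec: "(hmat c ** A :: complex^'n::finite^'n) *v v = c *s (A *v v)"
  by (simp add: matrix_vector_mul_assoc[symmetric] mat_cmult_vec)

lemma exists_root_c:
  assumes "z \<noteq> (0::complex)" and "n > 0"
  shows "\<exists>c. c ^ n = z"
proof -
  have "exp (Ln z / of_nat n) ^ n = exp (of_nat n * (Ln z / of_nat n))" by (rule exp_of_nat_mult[symmetric])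
  also have "\<dots> = exp (Ln z)" using assms by simp
  also have "\<dots> = z" using assms by simp
  finally show ?thesis by blast
qed

theorem mainTheorem4:
  fixes A :: "complex^'n^'n"
  assumes "CARD('n) \<ge> 2" and "invertible A"
  shows "loxodromic A \<longleftrightarrow>
    (\<exists>W. openin proj_top W \<and> W \<noteq> {} \<and> W \<subset> topspace proj_top \<and>
         proj_map A ` (proj_top closure_of W) \<subseteq> W)"
proof -
  note invA = assms(2)
  obtain idx Q Qi T where b: "bij_betw idx (UNIV::'n set) {0..<CARD('n)}"
    and QQi: "Q ** Qi = hmat 1" and QiQ: "Qi ** Q = hmat 1" and AT: "A = Qi ** T ** Q"
    and up': "\<forall>i j. idx j < idx i \<longrightarrow> T$i$j = 0"
    and ord': "\<forall>i j. idx i \<le> idx j \<longrightarrow> cmod (T$j$j) \<le> cmod (T$i$i)"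
    by (rule schur_hol[of A])
  have up: "\<And>i j. idx j < idx i \<Longrightarrow> T$i$j = 0" using up' by simp
  have ord: "\<And>i j. idx i \<le> idx j \<Longrightarrow> cmod (T$j$j) \<le> cmod (T$i$i)" using ord' by simp
  have inj: "inj idx" by (rule bij_idx_facts(1)[OF b])
  have QiQv: "Qi *v (Q *v v) = v" for v
    by (simp add: matrix_vector_mul_assoc QiQ)
  have QQiv: "Q *v (Qi *v v) = v" for v
    by (simp add: matrix_vector_mul_assoc QQi)
  have AQi: "A ** Qi = Qi ** T"
    unfolding AT by (simp add: matrix_mul_assoc[symmetric] QQi)
  have QA: "Q ** A = T ** Q"
    unfolding AT by (simp add: matrix_mul_assoc QQi)
  have AQiv: "A *v (Qi *v y) = Qi *v (T *v y)" for y
    by (simp add: matrix_vector_mul_assoc AQi)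
  have QAv: "Q *v (A *v v) = T *v (Q *v v)" for v
    by (simp add: matrix_vector_mul_assoc QA)
  have Ainj: "A *v v = 0 \<Longrightarrow> v = 0" for v
    using invA invertible_left_inverse matrix_left_invertible_ker by metis
  have E1: "\<exists>v. v \<noteq> 0 \<and> A *v v = T$i$i *s v" for i
  proof -
    obtain y where y: "y \<noteq> 0" "T *v y = T$i$i *s y" using tri_diag_eigen[OF up inj] by blast
    have "Qi *v y \<noteq> 0" using y(1) QQiv[of y] by auto
    moreover have "A *v (Qi *v y) = T$i$i *s (Qi *v y)" unfolding AQiv y(2) by (rule mv_smult)
    ultimately show ?thesis by blast
  qed
  have E2: "\<exists>i. \<mu> = T$i$i" if "v \<noteq> 0" "A *v v = \<mu> *s v" for v \<mu>
  proof -
    have "Q *v v \<noteq> 0" using that(1) QiQv[of v] by auto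
    moreover have "T *v (Q *v v) = \<mu> *s (Q *v v)" unfolding QAv[symmetric] that(2) by (rule mv_smult)
    ultimately show ?thesis using tri_eigen_diag[OF up inj] by blast
  qed
  have detA: "hdet A = (\<Prod>i\<in>UNIV. T$i$i)"
  proof -
    have "hdet A = hdet Qi * hdet T * hdet Q" unfolding AT by (simp add: det_mul)
    also have "hdet Qi * hdet Q = 1" using QiQ by (metis det_I det_mul)
    then have "hdet Qi * hdet T * hdet Q = hdet T" by (simp add: algebra_simps)
    also have "hdet T = (\<Prod>i\<in>UNIV. T$i$i)" by (rule det_tri[OF inj up])
    finally show ?thesis .
  qed
  have detcA: "hdet (hmat c ** A) = c ^ CARD('n) * (\<Prod>i\<in>UNIV. T$i$i)" for c
    by (simp add: det_mul det_mat_c detA)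
  show ?thesis
  proof
    assume lox: "loxodromic A"
    have neq: "\<exists>i j. cmod (T$i$i) \<noteq> cmod (T$j$j)"
    proof (rule ccontr)
      assume "\<not> (\<exists>i j. cmod (T$i$i) \<noteq> cmod (T$j$j))"
      then have alleq: "cmod (T$i$i) = cmod (T$j$j)" for i j by simp
      obtain i0 :: 'n where True by simp
      define r where "r = cmod (T$i0$i0)"
      have ri: "cmod (T$i$i) = r" for i unfolding r_def by (rule alleq)
      have dA: "hdet A \<noteq> 0" using invA invertible_det_nz by blast
      obtain c where c: "c ^ CARD('n) = 1 / hdet A" using exists_root_c[of "1 / hdet A" "CARD('n)"] dA by auto
      have c0: "c \<noteq> 0" using c dA by (metis divide_eq_0_iff one_neq_zero power_0_left zero_less_card_finite less_irrefl)
      have dc: "hdet (hmat c ** A) = 1" using c dA by (simp add: det_mul det_mat_c)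
      obtain \<mu> v where mv: "v \<noteq> 0" "(hmat c ** A) *v v = \<mu> *s v" "cmod \<mu> \<noteq> 1"
        using lox dc unfolding loxodromic_def by blast
      have "A *v v = (\<mu> / c) *s v"
      proof -
        have "c *s (A *v v) = \<mu> *s v" using mv(2) by (simp add: mat_c_mult_vec)
        then have "(1 / c) *s (c *s (A *v v)) = (1 / c) *s (\<mu> *s v)" by simp
        then show ?thesis using c0 by (simp add: vector_smult_assoc)
      qed
      then obtain i where i: "\<mu> / c = T$i$i" using E2[OF mv(1)] by blast
      have mu: "cmod \<mu> = cmod c * r"
      proof -
        have "\<mu> = c * T$i$i" using i c0 by (simp add: field_simps)
        then show ?thesis using ri[of i] by (simp add: norm_mult)
      qed
      have "1 = cmod (hdet (hmat c ** A))" using dc by simp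
      also have "\<dots> = cmod c ^ CARD('n) * (\<Prod>i\<in>UNIV. cmod (T$i$i))"
        unfolding detcA by (simp add: norm_mult norm_power prod_norm)
      also have "\<dots> = (cmod c * r) ^ CARD('n)" unfolding ri by (simp add: power_mult_distrib)
      finally have "(cmod c * r) ^ CARD('n) = 1 ^ CARD('n)" by simp
      then have "cmod c * r = 1" by (rule power_eq_imp_eq_base) (simp_all add: r_def)
      then show False using mu mv(3) by simp
    qed
    obtain S Si :: "complex^'n^'n" and L :: "'n set" where SSi: "S ** Si = hmat 1" "Si ** S = hmat 1"
      and Lne: "L \<noteq> {}" and LU: "L \<noteq> UNIV"
      and est: "\<And>y. y \<noteq> 0 \<Longrightarrow> (\<Sum>i\<in>-L. cmod (y$i)) \<le> (\<Sum>i\<in>L. cmod (y$i)) \<Longrightarrow>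
       (\<Sum>i\<in>-L. cmod (((S ** T ** Si) *v y)$i)) < (\<Sum>i\<in>L. cmod (((S ** T ** Si) *v y)$i))"
      using fwd_scaled[OF b up ord neq] by blast
    define R where "R = S ** Q"
    define Ri where "Ri = Qi ** Si"
    have RRi: "R *v (Ri *v y) = y" for y
      unfolding R_def Ri_def by (simp add: matrix_vector_mul_assoc matrix_mul_assoc
          matrix_mul_assoc[of S Q, symmetric] QQi SSi)
    have RiR: "Ri *v (R *v y) = y" for y
      unfolding R_def Ri_def by (simp add: matrix_vector_mul_assoc matrix_mul_assoc
          matrix_mul_assoc[of Qi Si, symmetric] QiQ SSi)
    have RA: "R *v (A *v v) = (S ** T ** Si) *v (R *v v)" for v
    proof -
      have "R *v (A *v v) = S *v (T *v (Q *v v))" unfolding R_def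
        by (simp add: matrix_vector_mul_assoc[symmetric] QAv)
      also have "\<dots> = S *v (T *v (Si *v (S *v (Q *v v))))"
      proof -
        have "Si *v (S *v x) = x" for x by (simp add: matrix_vector_mul_assoc SSi)
        then show ?thesis by simp
      qed
      also have "\<dots> = (S ** T ** Si) *v (R *v v)" unfolding R_def
        by (simp add: matrix_vector_mul_assoc matrix_mul_assoc)
      finally show ?thesis .
    qed
    define aa where "aa y = (\<Sum>i\<in>L. cmod (y$i))" for y :: "complex^'n"
    define bb where "bb y = (\<Sum>i\<in>-L. cmod (y$i))" for y :: "complex^'n"
    have aas: "aa (c *s y) = cmod c * aa y" for c y unfolding aa_def by (simp add: norm_mult sum_distrib_left)
    have bbs: "bb (c *s y) = cmod c * bb y" for c y unfolding bb_def by (simp add: norm_mult sum_distrib_left)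
    define Q1 where "Q1 v = (bb (R *v v) < aa (R *v v))" for v
    define Q2 where "Q2 v = (bb (R *v v) \<le> aa (R *v v))" for v
    have h1: "homog Q1" unfolding homog_def Q1_def by (simp add: mv_smult aas bbs)
    have h2: "homog Q2" unfolding homog_def Q2_def by (simp add: mv_smult aas bbs)
    have ca: "continuous_on UNIV (\<lambda>v. aa (R *v v))" unfolding aa_def
      by (intro continuous_intros)
    have cb: "continuous_on UNIV (\<lambda>v. bb (R *v v))" unfolding bb_def
      by (intro continuous_intros)
    have o0: "open {v::complex^'n. v \<noteq> 0}" by (simp add: open_Collect_neq)
    have o1: "open {v. v \<noteq> 0 \<and> Q1 v}"
    proof -
      have "{v. v \<noteq> 0 \<and> Q1 v} = {v. v \<noteq> 0} \<inter> {v. bb (R *v v) < aa (R *v v)}" unfolding Q1_def by auto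
      then show ?thesis using o0 open_Collect_less[OF cb ca] by (simp add: open_Int)
    qed
    have o2: "open {v. v \<noteq> 0 \<and> \<not> Q2 v}"
    proof -
      have "{v. v \<noteq> 0 \<and> \<not> Q2 v} = {v. v \<noteq> 0} \<inter> {v. aa (R *v v) < bb (R *v v)}" unfolding Q2_def by auto
      then show ?thesis using o0 open_Collect_less[OF ca cb] by (simp add: open_Int)
    qed
    define W where "W = hset Q1"
    have Wo: "openin proj_top W" unfolding W_def by (rule hset_open[OF h1 o1])
    define ev :: "'n \<Rightarrow> complex^'n" where "ev i = (\<chi> k. if k = i then 1 else 0)" for i
    have cev: "(\<lambda>k. cmod ((ev i)$k)) = (\<lambda>k. if k = i then 1 else 0)" for i
      unfolding ev_def by (rule ext) simp
    have aae: "aa (ev i) = (if i \<in> L then 1 else 0)" for i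
      unfolding aa_def cev by (simp add: sum.delta')
    have bbe: "bb (ev i) = (if i \<in> L then 0 else 1)" for i
      unfolding bb_def cev by (simp add: sum.delta')
    have ev0: "ev i \<noteq> 0" for i
    proof
      assume "ev i = 0"
      then have "(ev i)$i = 0" by simp
      then show False unfolding ev_def by simp
    qed
    have Riev0: "Ri *v ev i \<noteq> 0" for i
    proof
      assume "Ri *v ev i = 0"
      then have "R *v (Ri *v ev i) = 0" by simp
      then show False using RRi ev0 by metis
    qed
    obtain i1 where i1: "i1 \<in> L" using Lne by blast
    obtain i2 where i2: "i2 \<notin> L" using LU by blast
    have Wne: "W \<noteq> {}"
    proof -
      have "Q1 (Ri *v ev i1)" unfolding Q1_def RRi using aae bbe i1 by simp
      then have "pline (Ri *v ev i1) \<in> W" unfolding W_def using hset_mem[OF h1 Riev0] by simp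
      then show ?thesis by blast
    qed
    have Wsub: "W \<subset> topspace proj_top"
    proof -
      have "W \<subseteq> topspace proj_top" using Wo by (rule openin_subset)
      moreover have "\<not> Q1 (Ri *v ev i2)" unfolding Q1_def RRi using aae bbe i2 by simp
      then have "pline (Ri *v ev i2) \<notin> W" unfolding W_def using hset_mem[OF h1 Riev0] by simp
      moreover have "pline (Ri *v ev i2) \<in> topspace proj_top"
        unfolding topspace_proj proj_space_def using Riev0 by blast
      ultimately show ?thesis by blast
    qed
    have clos: "proj_top closure_of W \<subseteq> hset Q2"
    proof (rule closure_of_minimal)
      show "W \<subseteq> hset Q2" unfolding W_def hset_def Q1_def Q2_def by auto
      show "closedin proj_top (hset Q2)" by (rule hset_closed[OF h2 o2])
    qed
    have img: "proj_map A ` (proj_top closure_of W) \<subseteq> W"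
    proof
      fix x assume "x \<in> proj_map A ` (proj_top closure_of W)"
      then obtain p where p: "p \<in> proj_top closure_of W" "x = proj_map A p" by blast
      then have "p \<in> hset Q2" using clos by blast
      then obtain v where v: "v \<noteq> 0" "Q2 v" "p = pline v" unfolding hset_def by blast
      have x: "x = pline (A *v v)" using p(2) v(3) proj_map_pline by simp
      have Av: "A *v v \<noteq> 0" using v(1) Ainj by blast
      have Rv: "R *v v \<noteq> 0"
      proof
        assume "R *v v = 0"
        then have "Ri *v (R *v v) = 0" by simp
        then show False using RiR[of v] v(1) by simp
      qed
      have "Q1 (A *v v)" unfolding Q1_def RA
        using est[OF Rv] v(2) unfolding Q2_def aa_def bb_def by simp
      then show "x \<in> W" unfolding W_def x using hset_mem[OF h1 Av] by simp
    qed
    show "\<exists>W. openin proj_top W \<and> W \<noteq> {} \<and> W \<subset> topspace proj_top \<and>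
         proj_map A ` (proj_top closure_of W) \<subseteq> W"
      using Wo Wne Wsub img by blast
  next
    assume "\<exists>W. openin proj_top W \<and> W \<noteq> {} \<and> W \<subset> topspace proj_top \<and>
         proj_map A ` (proj_top closure_of W) \<subseteq> W"
    then obtain W where Wo: "openin proj_top W" and Wne: "W \<noteq> {}"
      and Wsub: "W \<subset> topspace proj_top" and img: "proj_map A ` (proj_top closure_of W) \<subseteq> W"
      by blast
    show "loxodromic A"
    proof (rule ccontr)
      assume "\<not> loxodromic A"
      then obtain c where dc: "hdet (hmat c ** A) = 1"
        and all1: "\<And>\<mu> v. v \<noteq> 0 \<Longrightarrow> (hmat c ** A) *v v = \<mu> *s v \<Longrightarrow> cmod \<mu> = 1"
        unfolding loxodromic_def by blast
      have m1: "cmod (c * T$i$i) = 1" for i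
      proof -
        obtain v where v: "v \<noteq> 0" "A *v v = T$i$i *s v" using E1 by blast
        have "(hmat c ** A) *v v = (c * T$i$i) *s v"
          by (simp add: mat_c_mult_vec v(2) vector_smult_assoc)
        then show ?thesis using all1[OF v(1)] by blast
      qed
      have nz: "T$i$i \<noteq> 0" for i using m1[of i] by auto
      have md: "cmod (T$i$i) = cmod (T$j$j)" for i j
      proof -
        have "cmod c * cmod (T$i$i) = cmod c * cmod (T$j$j)" using m1[of i] m1[of j] by (simp add: norm_mult)
        moreover have "cmod c \<noteq> 0" using m1[of i] by auto
        ultimately show ?thesis by simp
      qed
      define D where "D = proj_top closure_of W"
      define U where "U = {y. y \<noteq> 0 \<and> pline (Qi *v y) \<in> W}"
      define F where "F = {y. y \<noteq> 0 \<and> pline (Qi *v y) \<in> D}"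
      have Qi0: "Qi *v y = 0 \<longleftrightarrow> y = 0" for y
      proof
        assume "Qi *v y = 0"
        then have "Q *v (Qi *v y) = 0" by simp
        then show "y = 0" using QQiv[of y] by simp
      qed simp
      have contQi: "continuous (at x) (\<lambda>y. Qi *v y)" for x
        by (rule matrix_vector_mult_linear_continuous_at)
      have Uo: "open U"
      proof -
        have o: "open {v. v \<noteq> 0 \<and> pline v \<in> W}" using Wo openin_proj by blast
        have eq: "U = (\<lambda>y. Qi *v y) -` {v. v \<noteq> 0 \<and> pline v \<in> W}" unfolding U_def using Qi0 by auto
        show ?thesis unfolding eq by (rule continuous_open_vimage[OF o contQi])
      qed
      have cone: "pline (Qi *v (c' *s y)) = pline (Qi *v y)" if "c' \<noteq> 0" for c' y
        unfolding mv_smult by (rule pline_smult[OF that])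
      have Uc: "c' *s y \<in> U" if "y \<in> U" "c' \<noteq> 0" for y c'
        using that cone[OF that(2)] unfolding U_def by simp
      have Fc: "c' *s y \<in> F" if "y \<in> F" "c' \<noteq> 0" for y c'
        using that cone[OF that(2)] unfolding F_def by simp
      have F0: "0 \<notin> F" unfolding F_def by simp
      have Fcl: "closed (insert 0 F)"
      proof -
        have "closedin proj_top D" unfolding D_def by (rule closedin_closure_of)
        then have "openin proj_top (topspace proj_top - D)" by (simp add: closedin_def)
        then have o: "open {v. v \<noteq> 0 \<and> pline v \<in> topspace proj_top - D}" using openin_proj by blast
        have eq: "- insert 0 F = (\<lambda>y. Qi *v y) -` {v. v \<noteq> 0 \<and> pline v \<in> topspace proj_top - D}"
        proof -
          have "pline (Qi *v y) \<in> topspace proj_top" if "y \<noteq> 0" for y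
            unfolding topspace_proj proj_space_def using that Qi0 by blast
          then show ?thesis unfolding F_def using Qi0 by auto
        qed
        have "open (- insert 0 F)" unfolding eq by (rule continuous_open_vimage[OF o contQi])
        then show ?thesis by (simp add: closed_open)
      qed
      have WD: "W \<subseteq> D" unfolding D_def by (rule closure_of_subset[OF openin_subset[OF Wo]])
      have UF: "U \<subseteq> F" unfolding U_def F_def using WD by blast
      have MF: "T *v y \<in> U" if "y \<in> F" for y
      proof -
        have y: "y \<noteq> 0" "pline (Qi *v y) \<in> D" using that unfolding F_def by simp_all
        have e: "Qi *v (T *v y) = A *v (Qi *v y)" by (simp add: AQiv)
        have "Qi *v y \<noteq> 0" using Qi0 y(1) by simp
        then have nA: "A *v (Qi *v y) \<noteq> 0" using Ainj by blast
        have Ty: "T *v y \<noteq> 0"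
        proof
          assume "T *v y = 0"
          then have "Qi *v (T *v y) = 0" by simp
          then show False using e nA by simp
        qed
        have "pline (Qi *v (T *v y)) = proj_map A (pline (Qi *v y))" unfolding e proj_map_pline ..
        also have "\<dots> \<in> W" using img y(2) unfolding D_def by blast
        finally show ?thesis unfolding U_def using Ty by simp
      qed
      have rep: "\<exists>y. y \<noteq> 0 \<and> pline (Qi *v y) = w" if "w \<in> topspace proj_top" for w
      proof -
        have "w \<in> proj_space" using that unfolding topspace_proj .
        then obtain v where v: "w = pline v" "v \<noteq> 0" unfolding proj_space_def by (elim CollectE exE conjE)
        have "Q *v v \<noteq> 0" using v(2) QiQv[of v] by auto
        then show ?thesis using v QiQv[of v] by (intro exI[of _ "Q *v v"]) simp
      qed
      have WT: "W \<subseteq> topspace proj_top" using Wsub by (rule psubset_imp_subset)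
      have Une: "U \<noteq> {}"
      proof -
        obtain w where w: "w \<in> W" using Wne by (metis ex_in_conv)
        then have "w \<in> topspace proj_top" using WT by (rule subsetD[rotated])
        then obtain y where y: "y \<noteq> 0 \<and> pline (Qi *v y) = w" using rep by blast
        then have "y \<in> U" unfolding U_def using w by simp
        then show ?thesis by (metis empty_iff)
      qed
      have Upr: "\<exists>y. y \<noteq> 0 \<and> y \<notin> U"
      proof -
        obtain w where w: "w \<in> topspace proj_top - W" using psubset_imp_ex_mem[OF Wsub] by (elim exE)
        then have "w \<in> topspace proj_top" by simp
        then obtain y where y: "y \<noteq> 0 \<and> pline (Qi *v y) = w" using rep by blast
        then have "y \<noteq> 0 \<and> y \<notin> U" unfolding U_def using w by simp
        then show ?thesis by (rule exI)
      qed
      show False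
        by (rule core[OF up b nz md Uo Uc Fcl F0 Fc UF MF Une Upr])
    qed
  qed
qed

end
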